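(* Let $T=\{0,\dots,N\}$ and $\mathbb{F}$ a field. Let $C_\bullet$ and $C'_\bullet$ be filtrations (indexed by $T$) of finite-dimensional chain complexes $C=C_N$ and $C'=C'_N$ over $\mathbb{F}$, with filtration compatible ordered bases $\mathfrak{C}=(c_1,\dots,c_n)$ and $\mathfrak{C}'=(c'_1,\dots,c'_n)$ and corresponding filtration boundary matrices $D$ and $D'$. Let $\varphi_\bullet\colon C_\bullet\to C'_\bullet$ be an injective morphism of filtrations of chain complexes such that $\varphi=\varphi_N\colon C\to C'$ is an isomorphism, let $F$ be the matrix of $\varphi$ with respect to $\mathfrak{C}$ and $\mathfrak{C}'$, and set $D^{\varphi}=DF^{-1}=F^{-1}D'$. Suppose $V$ and $V^{\varphi}$ are invertible upper-triangular $n\times n$ matrices such that $R=DV$ and $R^{\varphi}=D^{\varphi}V^{\varphi}$ are reduced. Interpret the columns of $R$, $D$, $V$, $R^\varphi$, $D^\varphi$ as coordinate vectors (hence elements of $C$) with respect to $\mathfrak{C}$, and the columns of $V^{\varphi}$ as coordinate vectors (elements of $C'$) with respect to $\mathfrak{C}'$. Then the persistence module $\operatorname{im}H_*(\varphi_\bullet)$, $t\mapsto\operatorname{im}\big(H_*(\varphi_t)\colon H_*(C_t)\to H_*(C'_t)\big)$, has a barcode given by the multiset union \[ \left\{\operatorname{supp}_{C_\bullet}(r^{\varphi}_j)\setminus\operatorname{supp}_{C'_\bullet}(v^{\varphi}_j)\;\middle|\; r^{\varphi}_j\neq 0,\ \operatorname{supp}_{C_\bullet}(r^{\varphi}_j)\setminus\operatorname{supp}_{C'_\bullet}(v^{\varphi}_j)\neq\emptyset\right\}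 \cup \left\{\operatorname{supp}_{C_\bullet}(v_i)\;\middle|\; r_i=0 \text{ and } i\notin\operatorname{pivs}R^{\varphi}\right\}. \]
   Context: A chain complex here is a finite-dimensional graded $\mathbb{F}$-vector space with a differential $\partial$ of degree $-1$ with $\partial^2=0$. A filtration of a vector space $M$ indexed by $T$ is a chain of subspaces $M_0\subseteq\dots\subseteq M_N=M$; a filtration of chain complexes is such a chain of subcomplexes. The support of $m\in M$ is $\operatorname{supp}_{M_\bullet}(m)=\{t\in T\mid m\in M_t\}$. A basis $\mathfrak{M}$ of $M$ is filtration compatible if $\mathfrak{M}\cap M_t$ is a basis of $M_t$ for all $t$; an ordered basis is a filtration compatible ordered basis if it is filtration compatible and $m\le m'$ implies $\operatorname{supp}(m')\subseteq\operatorname{supp}(m)$. The filtration boundary matrix is the matrix of $\partial$ on $C$ in the given filtration compatible ordered basis. For a matrix $X$, $x_j$ denotes its $j$-th column; for a nonzero column $x_j$, $\operatorname{piv}x_j$ is the largest row index of a nonzero entry; $\operatorname{pivs}X$ is the set of pivots of nonzero columns of $X$; $X$ is reduced if no two nonzero columns have the same pivot. A persistence module indexed by $T$ (a functor from the poset $T$ to $\mathbb{F}$-vector spaces) has barcode $(I_\alpha)$ (a multiset of intervals of $T$) if it is isomorphic to $\bigoplus_\alpha C(I_\alpha)$, where the interval module $C(I)$ is $\mathbb{F}$ at $t\in I$, $0$ otherwise, with identity structure maps within $I$ and zero otherwise. *)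

theory Defs
  imports "Jordan_Normal_Form.VS_Connect"
begin

text \<open>Conventions.  Throughout, the index set is T = {0..N}.  A chain complex C with a
  chosen ordered basis c_1..c_n is represented in coordinates w.r.t. that basis:
  C is the space of vectors of dimension n over the field 'a (elements are coordinate
  vectors), the i-th basis vector c_(i+1) is unit_vec n i (indices are 0-based), and the
  differential is multiplication with the filtration boundary matrix D.
  A filtration is a function Cf :: nat => 'a vec set, Cf t being the subspace C_t.\<close>

abbreviation Vn :: "'a::field itself \<Rightarrow> nat \<Rightarrow> ('a, 'a vec) module" where
  "Vn ty n \<equiv> module_vec ty n"

text \<open>Support of an element m w.r.t. a filtration indexed by {0..N}.\<close>
definition supp :: "nat \<Rightarrow> (nat \<Rightarrow> 'a vec set) \<Rightarrow> 'a vec \<Rightarrow> nat set" where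
  "supp N Cf m = {t. t \<le> N \<and> m \<in> Cf t}"

text \<open>Cf is a filtration of the vector space F^n indexed by {0..N}.\<close>
definition is_filtration :: "nat \<Rightarrow> nat \<Rightarrow> (nat \<Rightarrow> 'a::field vec set) \<Rightarrow> bool" where
  "is_filtration n N Cf \<longleftrightarrow>
     (\<forall>t\<le>N. subspace (class_ring :: 'a ring) (Cf t) (module_vec TYPE('a) n)) \<and>
     (\<forall>s t. s \<le> t \<and> t \<le> N \<longrightarrow> Cf s \<subseteq> Cf t) \<and>
     Cf N = carrier_vec n"

text \<open>The standard (coordinate) basis, i.e. the chosen basis c_1,...,c_n, is a filtration
  compatible ordered basis of the filtration Cf.\<close>
definition compatible_ordered_basis :: "nat \<Rightarrow> nat \<Rightarrow> (nat \<Rightarrow> 'a::field vec set) \<Rightarrow> bool" where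
  "compatible_ordered_basis n N Cf \<longleftrightarrow>
     (\<forall>t\<le>N. vectorspace.basis (class_ring :: 'a ring)
                ((module_vec TYPE('a) n)\<lparr>carrier := Cf t\<rparr>)
                ({unit_vec n i | i. i < n} \<inter> Cf t)) \<and>
     (\<forall>i j. i \<le> j \<and> j < n \<longrightarrow>
        supp N Cf (unit_vec n j) \<subseteq> supp N Cf (unit_vec n i))"

text \<open>D is the matrix (w.r.t. the chosen basis) of a differential of degree -1 on a graded
  space whose i-th basis vector is homogeneous of degree deg i, squaring to zero, and every
  C_t is a subcomplex.\<close>
definition filtered_chain_complex ::
  "nat \<Rightarrow> nat \<Rightarrow> (nat \<Rightarrow> int) \<Rightarrow> (nat \<Rightarrow> 'a::field vec set) \<Rightarrow> 'a mat \<Rightarrow> bool" where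
  "filtered_chain_complex n N deg Cf D \<longleftrightarrow>
     D \<in> carrier_mat n n \<and> D * D = 0\<^sub>m n n \<and>
     (\<forall>i j. i < n \<and> j < n \<and> D $$ (i, j) \<noteq> 0 \<longrightarrow> deg i = deg j - 1) \<and>
     is_filtration n N Cf \<and>
     (\<forall>t\<le>N. \<forall>v\<in>Cf t. D *\<^sub>v v \<in> Cf t)"

text \<open>Pivots and reduced matrices.\<close>
definition piv :: "'a::zero mat \<Rightarrow> nat \<Rightarrow> nat" where
  "piv X j = Max {i. i < dim_row X \<and> X $$ (i, j) \<noteq> 0}"

definition pivs :: "'a::zero mat \<Rightarrow> nat set" where
  "pivs X = {piv X j | j. j < dim_col X \<and> col X j \<noteq> 0\<^sub>v (dim_row X)}"

definition reduced :: "'a::zero mat \<Rightarrow> bool" where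
  "reduced X \<longleftrightarrow> (\<forall>j1 j2. j1 < dim_col X \<and> j2 < dim_col X \<and> j1 \<noteq> j2 \<and>
      col X j1 \<noteq> 0\<^sub>v (dim_row X) \<and> col X j2 \<noteq> 0\<^sub>v (dim_row X) \<longrightarrow> piv X j1 \<noteq> piv X j2)"

subsection \<open>Persistence modules\<close>

text \<open>A persistence module indexed by {0..N}: vector spaces M t (t \<le> N) and linear
  structure maps f s t : M s -> M t (s \<le> t) forming a functor.\<close>
definition pers_mod :: "nat \<Rightarrow> (nat \<Rightarrow> ('a::field, 'b) module) \<Rightarrow> (nat \<Rightarrow> nat \<Rightarrow> 'b \<Rightarrow> 'b) \<Rightarrow> bool" where
  "pers_mod N M f \<longleftrightarrow>
     (\<forall>t\<le>N. vectorspace (class_ring :: 'a ring) (M t)) \<and>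
     (\<forall>s t. s \<le> t \<and> t \<le> N \<longrightarrow> f s t \<in> LinearCombinations.module_hom (class_ring :: 'a ring) (M s) (M t)) \<and>
     (\<forall>t\<le>N. \<forall>x\<in>carrier (M t). f t t x = x) \<and>
     (\<forall>r s t. r \<le> s \<and> s \<le> t \<and> t \<le> N \<longrightarrow> (\<forall>x\<in>carrier (M r). f s t (f r s x) = f r t x))"

text \<open>Isomorphism of persistence modules: a natural family of linear bijections.\<close>
definition pers_iso ::
  "nat \<Rightarrow> (nat \<Rightarrow> ('a::field, 'b) module) \<Rightarrow> (nat \<Rightarrow> nat \<Rightarrow> 'b \<Rightarrow> 'b)
       \<Rightarrow> (nat \<Rightarrow> ('a, 'c) module) \<Rightarrow> (nat \<Rightarrow> nat \<Rightarrow> 'c \<Rightarrow> 'c) \<Rightarrow> bool" where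
  "pers_iso N M f M' f' \<longleftrightarrow>
     (\<exists>\<eta>. (\<forall>t\<le>N. \<eta> t \<in> LinearCombinations.module_hom (class_ring :: 'a ring) (M t) (M' t) \<and>
                  bij_betw (\<eta> t) (carrier (M t)) (carrier (M' t))) \<and>
          (\<forall>s t. s \<le> t \<and> t \<le> N \<longrightarrow> (\<forall>x\<in>carrier (M s). \<eta> t (f s t x) = f' s t (\<eta> s x))))"

text \<open>Intervals of T = {0..N}.\<close>
definition is_interval :: "nat \<Rightarrow> nat set \<Rightarrow> bool" where
  "is_interval N I \<longleftrightarrow> I \<noteq> {} \<and> I \<subseteq> {0..N} \<and>
     (\<forall>a\<in>I. \<forall>b\<in>I. \<forall>c. a \<le> c \<and> c \<le> b \<longrightarrow> c \<in> I)"

text \<open>The direct sum of the interval modules C(L!0), ..., C(L!(k-1)), k = length L: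
  at t it consists of the k-tuples whose alpha-th entry vanishes unless t \<in> L!alpha;
  the structure map from s to t is the identity on the alpha-th summand if s,t \<in> L!alpha
  and zero otherwise.\<close>
definition int_sum_mod :: "'a::field itself \<Rightarrow> nat set list \<Rightarrow> nat \<Rightarrow> ('a, 'a vec) module" where
  "int_sum_mod ty L t = (module_vec ty (length L))\<lparr>carrier :=
      {v \<in> carrier_vec (length L). \<forall>j < length L. t \<notin> L ! j \<longrightarrow> v $ j = 0}\<rparr>"

definition int_sum_map :: "nat set list \<Rightarrow> nat \<Rightarrow> nat \<Rightarrow> 'a::field vec \<Rightarrow> 'a vec" where
  "int_sum_map L s t v = vec (length L) (\<lambda>j. if s \<in> L ! j \<and> t \<in> L ! j then v $ j else 0)"

text \<open>A persistence module has barcode B (a multiset of intervals) iff it is isomorphic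
  to the direct sum of the interval modules C(I), I \<in># B.\<close>
definition has_barcode ::
  "nat \<Rightarrow> (nat \<Rightarrow> ('a::field, 'b) module) \<Rightarrow> (nat \<Rightarrow> nat \<Rightarrow> 'b \<Rightarrow> 'b) \<Rightarrow> nat set multiset \<Rightarrow> bool" where
  "has_barcode N M f B \<longleftrightarrow> pers_mod N M f \<and> (\<forall>I\<in>#B. is_interval N I) \<and>
     (\<exists>L. mset L = B \<and> pers_iso N M f (int_sum_mod TYPE('a) L) (int_sum_map L))"

subsection \<open>Homology and the image persistence module\<close>

definition cycles :: "'a::field mat \<Rightarrow> 'a vec set \<Rightarrow> 'a vec set" where
  "cycles D W = {v \<in> W. D *\<^sub>v v = 0\<^sub>v (dim_row D)}"

definition boundaries :: "'a::field mat \<Rightarrow> 'a vec set \<Rightarrow> 'a vec set" where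
  "boundaries D W = {D *\<^sub>v v | v. v \<in> W}"

text \<open>Homology class x + B of a cycle x modulo the boundaries B.\<close>
definition hclass :: "'a vec set \<Rightarrow> 'a::field vec \<Rightarrow> 'a vec set" where
  "hclass B x = (\<lambda>b. x + b) ` B"

text \<open>The vector space of classes x + B (x ranging over S), with the quotient operations.\<close>
definition quot_mod :: "nat \<Rightarrow> 'a::field vec set \<Rightarrow> 'a vec set \<Rightarrow> ('a, 'a vec set) module" where
  "quot_mod n B S = \<lparr> carrier = hclass B ` S, mult = undefined, one = undefined,
     zero = B,
     add = (\<lambda>X Y. {x + y | x y. x \<in> X \<and> y \<in> Y}),
     smult = (\<lambda>c X. {c \<cdot>\<^sub>v x + b | x b. x \<in> X \<and> b \<in> B}) \<rparr>"

text \<open>im H_*(phi_t) = { [F z] : z a cycle of C_t } \<subseteq> H_*(C'_t) = Z(C'_t)/B(C'_t),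
  where F is the matrix of phi and D, D' the boundary matrices.\<close>
definition imH_mod :: "nat \<Rightarrow> (nat \<Rightarrow> 'a::field vec set) \<Rightarrow> 'a mat
      \<Rightarrow> (nat \<Rightarrow> 'a vec set) \<Rightarrow> 'a mat \<Rightarrow> 'a mat \<Rightarrow> nat \<Rightarrow> ('a, 'a vec set) module" where
  "imH_mod n Cf D C'f D' F t =
     quot_mod n (boundaries D' (C'f t)) ((\<lambda>z. F *\<^sub>v z) ` cycles D (Cf t))"

text \<open>Structure maps of im H_*(phi_.), induced by the inclusions C'_s \<subseteq> C'_t.\<close>
definition imH_map :: "(nat \<Rightarrow> 'a::field vec set) \<Rightarrow> 'a mat \<Rightarrow> nat \<Rightarrow> nat \<Rightarrow> 'a vec set \<Rightarrow> 'a vec set" where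
  "imH_map C'f D' s t X = {x + b | x b. x \<in> X \<and> b \<in> boundaries D' (C'f t)}"

end

theory Submission
  imports Defs
begin


definition pv :: "nat \<Rightarrow> 'a::zero vec \<Rightarrow> nat" where
  "pv n v = Max {i. i < n \<and> v $ i \<noteq> 0}"

lemma nonzero_ex:
  assumes "v \<in> carrier_vec n" "v \<noteq> 0\<^sub>v n"
  shows "\<exists>i<n. v $ i \<noteq> 0"
  using assms by (metis carrier_vecD eq_vecI index_zero_vec(1) index_zero_vec(2))

lemma pv_props:
  assumes "v \<in> carrier_vec n" "v \<noteq> 0\<^sub>v n"
  shows "pv n v < n" "v $ pv n v \<noteq> 0" "\<And>i. pv n v < i \<Longrightarrow> i < n \<Longrightarrow> v $ i = 0"
proof -
  let ?S = "{i. i < n \<and> v $ i \<noteq> 0}"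
  have fin: "finite ?S" by auto
  from nonzero_ex[OF assms] have ne: "?S \<noteq> {}" by auto
  have "pv n v \<in> ?S" unfolding pv_def using Max_in[OF fin ne] .
  thus "pv n v < n" "v $ pv n v \<noteq> 0" by auto
  fix i assume "pv n v < i" "i < n"
  thus "v $ i = 0" unfolding pv_def using Max_ge[OF fin, of i] by (metis (mono_tags, lifting) leD mem_Collect_eq)
qed

lemma pv_eqI:
  assumes "i < n" "v $ i \<noteq> 0" "\<And>j. i < j \<Longrightarrow> j < n \<Longrightarrow> v $ j = 0"
  shows "pv n v = i"
  unfolding pv_def
  by (rule Max_eqI) (use assms in \<open>auto intro: leI\<close>)

lemma indep_pv:
  fixes x :: "'i \<Rightarrow> 'a::field vec"
  assumes fin: "finite S"
    and car: "\<And>s. s \<in> S \<Longrightarrow> x s \<in> carrier_vec n"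
    and nz: "\<And>s. s \<in> S \<Longrightarrow> x s \<noteq> 0\<^sub>v n"
    and inj: "inj_on (\<lambda>s. pv n (x s)) S"
    and sum0: "\<And>i. i < n \<Longrightarrow> (\<Sum>s\<in>S. c s * x s $ i) = 0"
  shows "\<forall>s\<in>S. c s = 0"
proof (rule ccontr)
  assume "\<not> ?thesis"
  hence ne: "{s\<in>S. c s \<noteq> 0} \<noteq> {}" by auto
  let ?S0 = "{s\<in>S. c s \<noteq> 0}"
  have fin0: "finite ?S0" using fin by auto
  let ?p = "Max ((\<lambda>s. pv n (x s)) ` ?S0)"
  have "?p \<in> (\<lambda>s. pv n (x s)) ` ?S0" using fin0 ne by (intro Max_in) auto
  then obtain s0 where s0: "s0 \<in> S" "c s0 \<noteq> 0" and p: "?p = pv n (x s0)" by auto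
  have cs0: "x s0 \<in> carrier_vec n" "x s0 \<noteq> 0\<^sub>v n" using s0 car nz by auto
  have pn: "?p < n" using p pv_props(1)[OF cs0] by simp
  have "(\<Sum>s\<in>S. c s * x s $ ?p) = (\<Sum>s\<in>{s0}. c s * x s $ ?p)"
  proof (rule sum.mono_neutral_right[OF fin])
    show "{s0} \<subseteq> S" using s0 by auto
    show "\<forall>s\<in>S - {s0}. c s * x s $ ?p = 0"
    proof
      fix s assume s: "s \<in> S - {s0}"
      show "c s * x s $ ?p = 0"
      proof (cases "c s = 0")
        case False
        hence "pv n (x s) \<le> ?p" using fin0 s by (intro Max_ge) auto
        moreover have "pv n (x s) \<noteq> ?p" using inj s s0 p unfolding inj_on_def by auto
        ultimately have "pv n (x s) < ?p" by auto
        have cs: "x s \<in> carrier_vec n" "x s \<noteq> 0\<^sub>v n" using s car nz by auto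
        have "x s $ ?p = 0" using pv_props(3)[OF cs] \<open>pv n (x s) < ?p\<close> pn by auto
        thus ?thesis by simp
      qed simp
    qed
  qed
  also have "\<dots> = c s0 * x s0 $ ?p" by simp
  also have "\<dots> \<noteq> 0" using s0 p pv_props(2)[OF cs0] by simp
  finally show False using sum0[OF pn] by simp
qed

text \<open>closed subsets\<close>
definition lsub :: "nat \<Rightarrow> 'a::field vec set \<Rightarrow> bool" where
  "lsub n W \<longleftrightarrow> W \<subseteq> carrier_vec n \<and> 0\<^sub>v n \<in> W \<and> (\<forall>x\<in>W. \<forall>y\<in>W. x + y \<in> W) \<and>
     (\<forall>c. \<forall>x\<in>W. c \<cdot>\<^sub>v x \<in> W)"

lemma subspace_lsub:
  assumes "subspace (class_ring :: 'a::field ring) W (module_vec TYPE('a) n)"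
  shows "lsub n W"
proof -
  from assms have sm: "submodule (class_ring :: 'a ring) W (module_vec TYPE('a) n)"
    unfolding subspace_def by auto
  show ?thesis unfolding lsub_def
    using submodule.subset[OF sm] submodule.zero_closed[OF sm] submodule.m_closed[OF sm]
      submodule.smult_closed[OF sm]
    by (auto simp: module_vec_simps class_ring_simps)
qed

lemma lsub_carrier: "lsub n W \<Longrightarrow> x \<in> W \<Longrightarrow> x \<in> carrier_vec n"
  unfolding lsub_def by auto
lemma lsub_zero: "lsub n W \<Longrightarrow> 0\<^sub>v n \<in> W"
  unfolding lsub_def by auto
lemma lsub_add: "lsub n W \<Longrightarrow> x \<in> W \<Longrightarrow> y \<in> W \<Longrightarrow> x + y \<in> W"
  unfolding lsub_def by auto
lemma lsub_smult: "lsub n W \<Longrightarrow> x \<in> W \<Longrightarrow> c \<cdot>\<^sub>v x \<in> W"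
  unfolding lsub_def by auto

lemma minus_as_smult:
  fixes x y :: "'a::field vec"
  assumes "x \<in> carrier_vec n" "y \<in> carrier_vec n"
  shows "x - y = x + (-1) \<cdot>\<^sub>v y"
  using assms by (intro eq_vecI) auto

lemma lsub_minus: "lsub n W \<Longrightarrow> x \<in> W \<Longrightarrow> y \<in> W \<Longrightarrow> x - y \<in> W"
  using minus_as_smult[of x n y] lsub_carrier[of n W] lsub_add[of n W] lsub_smult[of n W]
  by metis

lemma lincomb_mem:
  fixes X :: "'a::field mat"
  assumes W: "lsub n W" and X: "X \<in> carrier_mat n m" and c: "c \<in> carrier_vec m"
    and cols: "\<And>a. a < m \<Longrightarrow> c $ a \<noteq> 0 \<Longrightarrow> col X a \<in> W"
  shows "X *\<^sub>v c \<in> W"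
proof -
  define ck where "ck k = vec m (\<lambda>a. if a < k then c $ a else 0)" for k
  have "X *\<^sub>v ck k \<in> W" if "k \<le> m" for k
    using that
  proof (induction k)
    case 0
    have "ck 0 = 0\<^sub>v m" unfolding ck_def by auto
    moreover have "X *\<^sub>v 0\<^sub>v m = 0\<^sub>v n" using X by (intro eq_vecI) auto
    ultimately show ?case using lsub_zero[OF W] by simp
  next
    case (Suc k)
    have eq: "ck (Suc k) = ck k + c $ k \<cdot>\<^sub>v unit_vec m k"
      unfolding ck_def using Suc.prems by (intro eq_vecI) (auto simp: less_Suc_eq)
    have "X *\<^sub>v ck (Suc k) = X *\<^sub>v ck k + X *\<^sub>v (c $ k \<cdot>\<^sub>v unit_vec m k)"
      unfolding eq using X by (intro mult_add_distrib_mat_vec) (auto simp: ck_def)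
    also have "X *\<^sub>v (c $ k \<cdot>\<^sub>v unit_vec m k) = c $ k \<cdot>\<^sub>v (X *\<^sub>v unit_vec m k)"
      using X by (intro mult_mat_vec) auto
    also have "X *\<^sub>v unit_vec m k = col X k"
      using X Suc.prems by (intro eq_vecI) auto
    finally have e: "X *\<^sub>v ck (Suc k) = X *\<^sub>v ck k + c $ k \<cdot>\<^sub>v col X k" .
    show ?case
    proof (cases "c $ k = 0")
      case True
      have "c $ k \<cdot>\<^sub>v col X k = 0\<^sub>v n" using True X by (intro eq_vecI) auto
      thus ?thesis using e Suc X lsub_carrier[OF W] by simp
    next
      case False
      thus ?thesis using e Suc cols[of k] lsub_add[OF W] lsub_smult[OF W] by auto
    qed
  qed
  moreover have "ck m = c" unfolding ck_def using c by (intro eq_vecI) auto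
  ultimately show ?thesis by auto
qed




lemma cring_class: "cring (class_ring :: 'a::field ring)"
  using class_field unfolding class_field_def field_def domain_def by auto

lemma quot_simps:
  "carrier (quot_mod n B S) = hclass B ` S"
  "zero (quot_mod n B S) = B"
  "add (quot_mod n B S) X Y = {x + y | x y. x \<in> X \<and> y \<in> Y}"
  "smult (quot_mod n B S) c X = {c \<cdot>\<^sub>v x + b | x b. x \<in> X \<and> b \<in> B}"
  unfolding quot_mod_def by auto

lemma hclass_add:
  assumes B: "lsub n B" and x: "x \<in> carrier_vec n" and y: "y \<in> carrier_vec n"
  shows "{a + b | a b. a \<in> hclass B x \<and> b \<in> hclass B y} = hclass B (x + y)"
proof (rule equalityI; rule subsetI)
  fix z assume "z \<in> {a + b | a b. a \<in> hclass B x \<and> b \<in> hclass B y}"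
  then obtain b1 b2 where b: "b1 \<in> B" "b2 \<in> B" and z: "z = (x + b1) + (y + b2)"
    unfolding hclass_def by auto
  have c: "b1 \<in> carrier_vec n" "b2 \<in> carrier_vec n" using b lsub_carrier[OF B] by auto
  have "z = (x + y) + (b1 + b2)" unfolding z using x y c by (intro eq_vecI) (auto simp: algebra_simps)
  thus "z \<in> hclass B (x + y)" unfolding hclass_def using lsub_add[OF B b] by auto
next
  fix z assume "z \<in> hclass B (x + y)"
  then obtain b where b: "b \<in> B" and z: "z = (x + y) + b" unfolding hclass_def by auto
  have c: "b \<in> carrier_vec n" using b lsub_carrier[OF B] by auto
  have "z = (x + b) + (y + 0\<^sub>v n)" unfolding z using x y c by (intro eq_vecI) (auto simp: algebra_simps)
  thus "z \<in> {a + b | a b. a \<in> hclass B x \<and> b \<in> hclass B y}"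
    unfolding hclass_def using b lsub_zero[OF B] by blast
qed

lemma hclass_smult:
  assumes B: "lsub n B" and x: "x \<in> carrier_vec n"
  shows "{c \<cdot>\<^sub>v a + b | a b. a \<in> hclass B x \<and> b \<in> B} = hclass B (c \<cdot>\<^sub>v x)"
proof (rule equalityI; rule subsetI)
  fix z assume "z \<in> {c \<cdot>\<^sub>v a + b | a b. a \<in> hclass B x \<and> b \<in> B}"
  then obtain b1 b2 where b: "b1 \<in> B" "b2 \<in> B" and z: "z = c \<cdot>\<^sub>v (x + b1) + b2"
    unfolding hclass_def by auto
  have cc: "b1 \<in> carrier_vec n" "b2 \<in> carrier_vec n" using b lsub_carrier[OF B] by auto
  have "z = c \<cdot>\<^sub>v x + (c \<cdot>\<^sub>v b1 + b2)" unfolding z using x cc by (intro eq_vecI) (auto simp: algebra_simps)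
  thus "z \<in> hclass B (c \<cdot>\<^sub>v x)" unfolding hclass_def using lsub_add[OF B lsub_smult[OF B b(1)] b(2)] by auto
next
  fix z assume "z \<in> hclass B (c \<cdot>\<^sub>v x)"
  then obtain b where b: "b \<in> B" and z: "z = c \<cdot>\<^sub>v x + b" unfolding hclass_def by auto
  have cc: "b \<in> carrier_vec n" using b lsub_carrier[OF B] by auto
  have "z = c \<cdot>\<^sub>v (x + 0\<^sub>v n) + b" unfolding z using x cc by (intro eq_vecI) (auto simp: algebra_simps)
  thus "z \<in> {c \<cdot>\<^sub>v a + b | a b. a \<in> hclass B x \<and> b \<in> B}"
    unfolding hclass_def using b lsub_zero[OF B] by blast
qed

lemma hclass_eqI:
  assumes B: "lsub n B" and x: "x \<in> carrier_vec n" and y: "y \<in> carrier_vec n" and d: "x - y \<in> B"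
  shows "hclass B x = hclass B y"
proof -
  have *: "hclass B x \<subseteq> hclass B y" if B: "lsub n B" and x: "x \<in> carrier_vec n" and y: "y \<in> carrier_vec n"
    and d: "x - y \<in> B" for x y
  proof
    fix z assume "z \<in> hclass B x"
    then obtain b where b: "b \<in> B" and z: "z = x + b" unfolding hclass_def by auto
    have cc: "b \<in> carrier_vec n" using b lsub_carrier[OF B] by auto
    have "z = y + ((x - y) + b)" unfolding z using x y cc by (intro eq_vecI) auto
    thus "z \<in> hclass B y" unfolding hclass_def using lsub_add[OF B d b] by auto
  qed
  have d2: "y - x \<in> B"
  proof -
    have "y - x = (-1) \<cdot>\<^sub>v (x - y)" using x y by (intro eq_vecI) auto
    thus ?thesis using lsub_smult[OF B d] by simp
  qed
  show ?thesis using *[OF B x y d] *[OF B y x d2] by auto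
qed

lemma hclass_eqD:
  assumes B: "lsub n B" and x: "x \<in> carrier_vec n" and y: "y \<in> carrier_vec n"
    and e: "hclass B x = hclass B y"
  shows "x - y \<in> B"
proof -
  have "x \<in> hclass B x" unfolding hclass_def using lsub_zero[OF B] x by force
  then obtain b where b: "b \<in> B" and xb: "x = y + b" using e unfolding hclass_def by auto
  have cc: "b \<in> carrier_vec n" using b lsub_carrier[OF B] by auto
  have "x - y = b" unfolding xb using y cc by (intro eq_vecI) auto
  thus ?thesis using b by simp
qed

lemma hclass_zero:
  assumes B: "lsub n B"
  shows "hclass B (0\<^sub>v n) = B"
  unfolding hclass_def using lsub_carrier[OF B] by (auto simp: image_iff) 

lemma hclass_addB:
  assumes B: "lsub n B" and B': "B' \<subseteq> B" and B'0: "0\<^sub>v n \<in> B'" and x: "x \<in> carrier_vec n"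
  shows "{a + b | a b. a \<in> hclass B' x \<and> b \<in> B} = hclass B x"
proof (rule equalityI; rule subsetI)
  fix z assume "z \<in> {a + b | a b. a \<in> hclass B' x \<and> b \<in> B}"
  then obtain b1 b2 where b: "b1 \<in> B" "b2 \<in> B" and z: "z = (x + b1) + b2"
    unfolding hclass_def using B' by auto
  have c: "b1 \<in> carrier_vec n" "b2 \<in> carrier_vec n" using b lsub_carrier[OF B] by auto
  have "z = x + (b1 + b2)" unfolding z using x c by (intro eq_vecI) (auto simp: algebra_simps)
  thus "z \<in> hclass B x" unfolding hclass_def using lsub_add[OF B b] by auto
next
  fix z assume "z \<in> hclass B x"
  then obtain b where b: "b \<in> B" and z: "z = x + b" unfolding hclass_def by auto
  have c: "b \<in> carrier_vec n" using b lsub_carrier[OF B] by auto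
  have "z = (x + 0\<^sub>v n) + b" unfolding z using x c by (intro eq_vecI) (auto simp: algebra_simps)
  thus "z \<in> {a + b | a b. a \<in> hclass B' x \<and> b \<in> B}"
    unfolding hclass_def using b B'0 by blast
qed

lemma quot_vs:
  fixes B S :: "'a::field vec set"
  assumes B: "lsub n B" and S: "lsub n S"
  shows "vectorspace (class_ring :: 'a ring) (quot_mod n B S)"
proof -
  note Sc = lsub_carrier[OF S]
  have add: "add (quot_mod n B S) (hclass B x) (hclass B y) = hclass B (x + y)"
    if "x \<in> S" "y \<in> S" for x y
    unfolding quot_simps using hclass_add[OF B Sc Sc] that by auto
  have smult: "smult (quot_mod n B S) c (hclass B x) = hclass B (c \<cdot>\<^sub>v x)"
    if "x \<in> S" for x c
    unfolding quot_simps using hclass_smult[OF B Sc] that by auto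
  have zero: "zero (quot_mod n B S) = hclass B (0\<^sub>v n)"
    unfolding quot_simps using hclass_zero[OF B] by simp
  have car: "carrier (quot_mod n B S) = hclass B ` S" by (simp add: quot_simps)
  have mod: "module (class_ring :: 'a ring) (quot_mod n B S)"
  proof (rule module_criteria[OF cring_class])
    show "\<zero>\<^bsub>quot_mod n B S\<^esub> \<in> carrier (quot_mod n B S)"
      unfolding zero car using lsub_zero[OF S] by auto
    show "\<forall>v w. v \<in> carrier (quot_mod n B S) \<and> w \<in> carrier (quot_mod n B S) \<longrightarrow>
      v \<oplus>\<^bsub>quot_mod n B S\<^esub> w \<in> carrier (quot_mod n B S)"
      unfolding car using add lsub_add[OF S] by auto
    show "\<forall>v\<in>carrier (quot_mod n B S). \<exists>neg_v\<in>carrier (quot_mod n B S).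
      v \<oplus>\<^bsub>quot_mod n B S\<^esub> neg_v = \<zero>\<^bsub>quot_mod n B S\<^esub>"
    proof
      fix v assume "v \<in> carrier (quot_mod n B S)"
      then obtain x where x: "x \<in> S" and v: "v = hclass B x" unfolding car by auto
      have m: "(-1) \<cdot>\<^sub>v x \<in> S" using lsub_smult[OF S x] .
      have "x + (-1) \<cdot>\<^sub>v x = 0\<^sub>v n" using Sc[OF x] by (intro eq_vecI) auto
      hence "v \<oplus>\<^bsub>quot_mod n B S\<^esub> hclass B ((-1) \<cdot>\<^sub>v x) = \<zero>\<^bsub>quot_mod n B S\<^esub>"
        unfolding v zero using add[OF x m] by simp
      thus "\<exists>neg_v\<in>carrier (quot_mod n B S). v \<oplus>\<^bsub>quot_mod n B S\<^esub> neg_v = \<zero>\<^bsub>quot_mod n B S\<^esub>"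
        using m unfolding car by auto
    qed
    show "\<forall>c v. c \<in> carrier class_ring \<and> v \<in> carrier (quot_mod n B S) \<longrightarrow>
      c \<odot>\<^bsub>quot_mod n B S\<^esub> v \<in> carrier (quot_mod n B S)"
      unfolding car using smult lsub_smult[OF S] by auto
    show "\<forall>v w. v \<in> carrier (quot_mod n B S) \<and> w \<in> carrier (quot_mod n B S) \<longrightarrow>
      v \<oplus>\<^bsub>quot_mod n B S\<^esub> w = w \<oplus>\<^bsub>quot_mod n B S\<^esub> v"
    proof (intro allI impI)
      fix v w assume "v \<in> carrier (quot_mod n B S) \<and> w \<in> carrier (quot_mod n B S)"
      then obtain x y where xy: "x \<in> S" "y \<in> S" "v = hclass B x" "w = hclass B y" unfolding car by auto
      show "v \<oplus>\<^bsub>quot_mod n B S\<^esub> w = w \<oplus>\<^bsub>quot_mod n B S\<^esub> v"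
        unfolding xy add[OF xy(1,2)] add[OF xy(2,1)] using comm_add_vec[OF Sc[OF xy(1)] Sc[OF xy(2)]] by simp
    qed
    show "\<forall>v w x. v \<in> carrier (quot_mod n B S) \<and> w \<in> carrier (quot_mod n B S) \<and> x \<in> carrier (quot_mod n B S) \<longrightarrow>
      v \<oplus>\<^bsub>quot_mod n B S\<^esub> w \<oplus>\<^bsub>quot_mod n B S\<^esub> x = v \<oplus>\<^bsub>quot_mod n B S\<^esub> (w \<oplus>\<^bsub>quot_mod n B S\<^esub> x)"
    proof (intro allI impI)
      fix u v w assume "u \<in> carrier (quot_mod n B S) \<and> v \<in> carrier (quot_mod n B S) \<and> w \<in> carrier (quot_mod n B S)"
      then obtain x y z where xy: "x \<in> S" "y \<in> S" "z \<in> S" "u = hclass B x" "v = hclass B y" "w = hclass B z" unfolding car by auto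
      show "u \<oplus>\<^bsub>quot_mod n B S\<^esub> v \<oplus>\<^bsub>quot_mod n B S\<^esub> w = u \<oplus>\<^bsub>quot_mod n B S\<^esub> (v \<oplus>\<^bsub>quot_mod n B S\<^esub> w)"
        unfolding xy add[OF xy(1,2)] add[OF xy(2,3)] add[OF lsub_add[OF S xy(1,2)] xy(3)] add[OF xy(1) lsub_add[OF S xy(2,3)]]
        using assoc_add_vec[OF Sc[OF xy(1)] Sc[OF xy(2)] Sc[OF xy(3)]] by simp
    qed
    show "\<forall>v\<in>carrier (quot_mod n B S). v \<oplus>\<^bsub>quot_mod n B S\<^esub> \<zero>\<^bsub>quot_mod n B S\<^esub> = v"
      unfolding car zero using add lsub_zero[OF S] Sc by auto
    show "\<forall>a b v. a \<in> carrier class_ring \<and> b \<in> carrier class_ring \<and> v \<in> carrier (quot_mod n B S) \<longrightarrow>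
      (a \<otimes>\<^bsub>class_ring\<^esub> b) \<odot>\<^bsub>quot_mod n B S\<^esub> v = a \<odot>\<^bsub>quot_mod n B S\<^esub> (b \<odot>\<^bsub>quot_mod n B S\<^esub> v)"
      unfolding car using smult lsub_smult[OF S] by (auto simp: class_ring_simps smult_smult_assoc)
    show "\<forall>v\<in>carrier (quot_mod n B S). \<one>\<^bsub>class_ring\<^esub> \<odot>\<^bsub>quot_mod n B S\<^esub> v = v"
      unfolding car using smult by (auto simp: class_ring_simps)
    show "\<forall>a b v. a \<in> carrier class_ring \<and> b \<in> carrier class_ring \<and> v \<in> carrier (quot_mod n B S) \<longrightarrow>
      (a \<oplus>\<^bsub>class_ring\<^esub> b) \<odot>\<^bsub>quot_mod n B S\<^esub> v =
      a \<odot>\<^bsub>quot_mod n B S\<^esub> v \<oplus>\<^bsub>quot_mod n B S\<^esub> b \<odot>\<^bsub>quot_mod n B S\<^esub> v"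
      unfolding car using smult add lsub_smult[OF S] by (auto simp: class_ring_simps add_smult_distrib_vec)
    show "\<forall>a v w. a \<in> carrier class_ring \<and> v \<in> carrier (quot_mod n B S) \<and> w \<in> carrier (quot_mod n B S) \<longrightarrow>
      a \<odot>\<^bsub>quot_mod n B S\<^esub> (v \<oplus>\<^bsub>quot_mod n B S\<^esub> w) =
      a \<odot>\<^bsub>quot_mod n B S\<^esub> v \<oplus>\<^bsub>quot_mod n B S\<^esub> a \<odot>\<^bsub>quot_mod n B S\<^esub> w"
    proof (intro allI impI)
      fix a :: 'a and v w assume "a \<in> carrier class_ring \<and> v \<in> carrier (quot_mod n B S) \<and> w \<in> carrier (quot_mod n B S)"
      then obtain x y where xy: "x \<in> S" "y \<in> S" "v = hclass B x" "w = hclass B y" unfolding car by auto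
      show "a \<odot>\<^bsub>quot_mod n B S\<^esub> (v \<oplus>\<^bsub>quot_mod n B S\<^esub> w) =
        a \<odot>\<^bsub>quot_mod n B S\<^esub> v \<oplus>\<^bsub>quot_mod n B S\<^esub> a \<odot>\<^bsub>quot_mod n B S\<^esub> w"
        unfolding xy add[OF xy(1,2)] smult[OF lsub_add[OF S xy(1,2)]] smult[OF xy(1)] smult[OF xy(2)]
          add[OF lsub_smult[OF S xy(1)] lsub_smult[OF S xy(2)]]
        using smult_add_distrib_vec[OF Sc[OF xy(1)] Sc[OF xy(2)]] by simp
    qed
  qed
  show ?thesis unfolding vectorspace_def using mod class_field by (auto simp: class_field_def)
qed




lemma filt_lsub:
  assumes "is_filtration n N Cf" "t \<le> N"
  shows "lsub n (Cf t)"
proof -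
  have "subspace (class_ring :: 'a ring) (Cf t) (module_vec TYPE('a) n)"
    using assms unfolding is_filtration_def by simp
  thus ?thesis by (rule subspace_lsub)
qed

lemma filt_mono:
  assumes "is_filtration n N Cf" "s \<le> t" "t \<le> N"
  shows "Cf s \<subseteq> Cf t"
proof -
  have "\<forall>s t. s \<le> t \<and> t \<le> N \<longrightarrow> Cf s \<subseteq> Cf t" using assms(1) unfolding is_filtration_def by simp
  thus ?thesis using assms(2,3) by simp
qed

lemma filt_top:
  assumes "is_filtration n N Cf"
  shows "Cf N = carrier_vec n"
  using assms unfolding is_filtration_def by simp

lemma supp_up:
  assumes "is_filtration n N Cf" "s \<in> supp N Cf v" "s \<le> t" "t \<le> N"
  shows "t \<in> supp N Cf v"
  using assms filt_mono[OF assms(1,3,4)] unfolding supp_def by auto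

lemma unit_down:
  assumes "compatible_ordered_basis n N Cf" "t \<le> N" "unit_vec n j \<in> Cf t" "i \<le> j" "j < n"
  shows "unit_vec n i \<in> Cf t"
proof -
  have "\<forall>i j. i \<le> j \<and> j < n \<longrightarrow> supp N Cf (unit_vec n j) \<subseteq> supp N Cf (unit_vec n i)"
    using assms(1) unfolding compatible_ordered_basis_def by simp
  hence "supp N Cf (unit_vec n j) \<subseteq> supp N Cf (unit_vec n i)" using assms(4,5) by simp
  moreover have "t \<in> supp N Cf (unit_vec n j)" using assms unfolding supp_def by auto
  ultimately show ?thesis unfolding supp_def by auto
qed

lemma unit_from_nonzero:
  fixes Cf :: "nat \<Rightarrow> 'a::field vec set"
  assumes F: "is_filtration n N Cf" and B: "compatible_ordered_basis n N Cf" and t: "t \<le> N"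
    and v: "v \<in> Cf t" and i: "i < n" and vi: "v $ i \<noteq> 0"
  shows "unit_vec n i \<in> Cf t"
proof (rule ccontr)
  assume nu: "unit_vec n i \<notin> Cf t"
  let ?U = "{unit_vec n i | i. i < n} \<inter> Cf t"
  let ?M = "module_vec TYPE('a) n"
  have sub: "subspace (class_ring :: 'a ring) (Cf t) ?M" using F t unfolding is_filtration_def by simp
  have sm: "submodule (class_ring :: 'a ring) (Cf t) ?M" using sub unfolding subspace_def by auto
  have bas: "vectorspace.basis (class_ring :: 'a ring) (?M\<lparr>carrier := Cf t\<rparr>) ?U"
    using B t unfolding compatible_ordered_basis_def by simp
  hence e1: "LinearCombinations.module.span (class_ring :: 'a ring) (?M\<lparr>carrier := Cf t\<rparr>) ?U = Cf t"
    using vectorspace.basis_def[OF vectorspace.subspace_is_vs[OF vec_vs sub]] by auto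
  have e2: "LinearCombinations.module.span (class_ring :: 'a ring) (?M\<lparr>carrier := Cf t\<rparr>) ?U = LinearCombinations.module.span (class_ring :: 'a ring) ?M ?U"
    by (rule module.span_li_not_depend(1)[OF vec_module _ sm]) auto
  let ?W = "{w \<in> carrier_vec n. w $ i = 0}"
  have smW: "submodule (class_ring :: 'a ring) ?W ?M"
    unfolding submodule_def using vec_module i by (auto simp: module_vec_simps class_ring_simps)
  have "?U \<subseteq> ?W"
  proof
    fix x assume "x \<in> ?U"
    then obtain j where j: "j < n" "x = unit_vec n j" "x \<in> Cf t" by auto
    hence "j \<noteq> i" using nu by auto
    thus "x \<in> ?W" using j i by simp
  qed
  hence e3: "LinearCombinations.module.span (class_ring :: 'a ring) ?M ?U \<subseteq> ?W"
    by (rule module.span_is_subset[OF vec_module _ smW])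
  have "Cf t \<subseteq> ?W" using e3 unfolding e2[symmetric] e1 .
  thus False using v vi by auto
qed

lemma mem_from_units:
  fixes Cf :: "nat \<Rightarrow> 'a::field vec set"
  assumes F: "is_filtration n N Cf" and t: "t \<le> N" and v: "v \<in> carrier_vec n"
    and u: "\<And>i. i < n \<Longrightarrow> v $ i \<noteq> 0 \<Longrightarrow> unit_vec n i \<in> Cf t"
  shows "v \<in> Cf t"
proof -
  have "1\<^sub>m n *\<^sub>v v \<in> Cf t"
    by (rule lincomb_mem[OF filt_lsub[OF F t]]) (use v u in auto)
  thus ?thesis using v by simp
qed

lemma mem_below:
  fixes Cf :: "nat \<Rightarrow> 'a::field vec set"
  assumes F: "is_filtration n N Cf" and B: "compatible_ordered_basis n N Cf" and t: "t \<le> N"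
    and x: "x \<in> Cf t" and p: "p < n" and xp: "x $ p \<noteq> 0"
    and v: "v \<in> carrier_vec n" and vb: "\<And>i. p < i \<Longrightarrow> i < n \<Longrightarrow> v $ i = 0"
  shows "v \<in> Cf t"
proof (rule mem_from_units[OF F t v])
  fix i assume i: "i < n" "v $ i \<noteq> 0"
  hence "i \<le> p" using vb by (meson not_le)
  thus "unit_vec n i \<in> Cf t"
    using unit_down[OF B t unit_from_nonzero[OF F B t x p xp] _ p] by blast
qed



(* upper triangular *)

lemma ut_diag:
  fixes V :: "'a::field mat"
  assumes V: "V \<in> carrier_mat n n" "upper_triangular V" "invertible_mat V" and i: "i < n"
  shows "V $$ (i, i) \<noteq> 0"
proof
  assume z: "V $$ (i, i) = 0"
  from V(3) obtain W where W: "V * W = 1\<^sub>m (dim_row V)" "W * V = 1\<^sub>m (dim_row W)"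
    unfolding invertible_mat_def inverts_mat_def by blast
  have Wc: "W \<in> carrier_mat n n"
  proof -
    have "dim_col (V * W) = n" using W(1) V(1) by simp
    hence "dim_col W = n" by simp
    moreover have "dim_row (W * V) = dim_col (W * V)" using W(2) by simp
    hence "dim_row W = n" using V(1) by simp
    ultimately show ?thesis by auto
  qed
  have "det V = prod_list (diag_mat V)" by (rule det_upper_triangular[OF V(2) V(1)])
  also have "\<dots> = 0" using z i V(1) by (auto simp: diag_mat_def prod_list_zero_iff)
  finally have "det (V * W) = 0" using det_mult[OF V(1) Wc] by simp
  moreover have "det (V * W) = 1" using W(1) V(1) by simp
  ultimately show False by simp
qed

lemma ut_col_zero:
  assumes V: "V \<in> carrier_mat n n" "upper_triangular V" and "j < i" "i < n"
  shows "col V j $ i = 0"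
  using assms upper_triangularD[OF V(2)] by auto

lemma ut_col_pv:
  fixes V :: "'a::field mat"
  assumes V: "V \<in> carrier_mat n n" "upper_triangular V" "invertible_mat V" and j: "j < n"
  shows "pv n (col V j) = j" "col V j \<noteq> 0\<^sub>v n" "col V j \<in> carrier_vec n"
proof -
  show "pv n (col V j) = j"
    by (rule pv_eqI) (use j V ut_diag[OF V j] ut_col_zero[OF V(1,2)] in auto)
  show "col V j \<noteq> 0\<^sub>v n"
  proof
    assume "col V j = 0\<^sub>v n"
    hence "col V j $ j = 0" using j by simp
    thus False using ut_diag[OF V j] j V(1) by simp
  qed
  show "col V j \<in> carrier_vec n" using V(1) by auto
qed

lemma ut_decomp:
  fixes V :: "'a::field mat"
  assumes V: "V \<in> carrier_mat n n" "upper_triangular V" "invertible_mat V"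
  shows "w \<in> carrier_vec n \<Longrightarrow> (\<And>i. b \<le> i \<Longrightarrow> i < n \<Longrightarrow> w $ i = 0) \<Longrightarrow>
    \<exists>u \<in> carrier_vec n. V *\<^sub>v u = w \<and> (\<forall>i. b \<le> i \<longrightarrow> i < n \<longrightarrow> u $ i = 0)"
proof (induction b arbitrary: w)
  case 0
  hence "w = 0\<^sub>v n" by (intro eq_vecI) auto
  moreover have "V *\<^sub>v 0\<^sub>v n = 0\<^sub>v n" using V(1) by (intro eq_vecI) auto
  ultimately show ?case by (intro bexI[of _ "0\<^sub>v n"]) auto
next
  case (Suc b)
  show ?case
  proof (cases "b < n")
    case False
    hence "\<forall>i. b \<le> i \<longrightarrow> i < n \<longrightarrow> w $ i = 0" by auto
    thus ?thesis using Suc.IH[OF Suc.prems(1)] by auto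
  next
    case bn: True
    define c where "c = w $ b / V $$ (b, b)"
    define w' where "w' = w - c \<cdot>\<^sub>v col V b"
    have dg: "V $$ (b, b) \<noteq> 0" using ut_diag[OF V bn] .
    have w'c: "w' \<in> carrier_vec n" unfolding w'_def using Suc.prems V(1) by auto
    have "\<exists>u \<in> carrier_vec n. V *\<^sub>v u = w' \<and> (\<forall>i. b \<le> i \<longrightarrow> i < n \<longrightarrow> u $ i = 0)"
    proof (rule Suc.IH[OF w'c])
      fix i assume i: "b \<le> i" "i < n"
      show "w' $ i = 0"
      proof (cases "i = b")
        case True
        thus ?thesis unfolding w'_def c_def using i Suc.prems V(1) dg by auto
      next
        case False
        hence "b < i" using i by auto
        have "col V b $ i = 0" by (rule ut_col_zero[OF V(1,2) \<open>b < i\<close> i(2)])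
        thus ?thesis unfolding w'_def using i \<open>b < i\<close> Suc.prems(1) Suc.prems(2)[of i] V(1) by auto
      qed
    qed
    then obtain u' where u': "u' \<in> carrier_vec n" "V *\<^sub>v u' = w'" "\<forall>i. b \<le> i \<longrightarrow> i < n \<longrightarrow> u' $ i = 0" by blast
    define u where "u = u' + c \<cdot>\<^sub>v unit_vec n b"
    have uc: "u \<in> carrier_vec n" unfolding u_def using u' by auto
    have "V *\<^sub>v u = V *\<^sub>v u' + V *\<^sub>v (c \<cdot>\<^sub>v unit_vec n b)"
      unfolding u_def using u' V(1) by (intro mult_add_distrib_mat_vec) auto
    also have "V *\<^sub>v (c \<cdot>\<^sub>v unit_vec n b) = c \<cdot>\<^sub>v (V *\<^sub>v unit_vec n b)"
      using V(1) by (intro mult_mat_vec) auto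
    also have "V *\<^sub>v unit_vec n b = col V b"
      using V(1) bn by (intro eq_vecI) auto
    finally have "V *\<^sub>v u = w" unfolding u'(2) w'_def using Suc.prems V(1) by (intro eq_vecI) auto
    moreover have "\<forall>i. Suc b \<le> i \<longrightarrow> i < n \<longrightarrow> u $ i = 0" unfolding u_def using u' by auto
    ultimately show ?thesis using uc by blast
  qed
qed




locale thm_setup =
  fixes n N :: nat
    and Cf C'f :: "nat \<Rightarrow> 'a::field vec set"
    and deg deg' :: "nat \<Rightarrow> int"
    and D D' F G Dphi V Vphi R Rphi :: "'a mat"
  assumes C: "filtered_chain_complex n N deg Cf D"
    and C': "filtered_chain_complex n N deg' C'f D'"
    and basisC: "compatible_ordered_basis n N Cf"
    and basisC': "compatible_ordered_basis n N C'f"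
    and F_carrier: "F \<in> carrier_mat n n"
    and F_chain: "F * D = D' * F"
    and G_inv: "G \<in> carrier_mat n n" "F * G = 1\<^sub>m n" "G * F = 1\<^sub>m n"
    and Dphi: "Dphi = D * G"
    and V: "V \<in> carrier_mat n n" "upper_triangular V" "invertible_mat V"
    and Vphi: "Vphi \<in> carrier_mat n n" "upper_triangular Vphi" "invertible_mat Vphi"
    and R: "R = D * V" "reduced R"
    and Rphi: "Rphi = Dphi * Vphi" "reduced Rphi"
begin

lemma Dc: "D \<in> carrier_mat n n" and DD: "D * D = 0\<^sub>m n n" and filtC: "is_filtration n N Cf"
  using C unfolding filtered_chain_complex_def by auto
lemma D'c: "D' \<in> carrier_mat n n" and filtC': "is_filtration n N C'f"
  using C' unfolding filtered_chain_complex_def by auto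
lemma Gc: "G \<in> carrier_mat n n" using G_inv by simp
lemma Dphic: "Dphi \<in> carrier_mat n n" using Dc Gc Dphi by simp
lemma Rc: "R \<in> carrier_mat n n" using Dc V R by simp
lemma Rphic: "Rphi \<in> carrier_mat n n" using Dphic Vphi Rphi by simp

lemma FDphi: "F * Dphi = D'"
proof -
  have "F * Dphi = (F * D) * G" unfolding Dphi using F_carrier Dc Gc by simp
  also have "\<dots> = (D' * F) * G" by (simp add: F_chain)
  also have "\<dots> = D' * (F * G)" using F_carrier D'c Gc by simp
  also have "\<dots> = D'" using G_inv D'c by simp
  finally show ?thesis .
qed

lemma GD': "G * D' = Dphi"
proof -
  have "G * D' = G * (F * Dphi)" by (simp add: FDphi)
  also have "\<dots> = (G * F) * Dphi" using F_carrier Dphic Gc by simp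
  also have "\<dots> = Dphi" using G_inv Dphic by simp
  finally show ?thesis .
qed

lemma DDphi: "D * Dphi = 0\<^sub>m n n"
proof -
  have "D * Dphi = (D * D) * G" unfolding Dphi using Dc Gc by simp
  also have "\<dots> = 0\<^sub>m n n" unfolding DD using Gc by (simp add: left_mult_zero_mat)
  finally show ?thesis .
qed

lemma colRphi: "j < n \<Longrightarrow> col Rphi j = Dphi *\<^sub>v col Vphi j"
  unfolding Rphi(1) by (rule col_mult2[OF Dphic Vphi(1)])
lemma colR: "j < n \<Longrightarrow> col R j = D *\<^sub>v col V j"
  unfolding R(1) by (rule col_mult2[OF Dc V(1)])

lemma F_Rphi: "j < n \<Longrightarrow> F *\<^sub>v col Rphi j = D' *\<^sub>v col Vphi j"
proof -
  assume j: "j < n"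
  have "F *\<^sub>v col Rphi j = (F * Dphi) *\<^sub>v col Vphi j"
    unfolding colRphi[OF j] using F_carrier Dphic Vphi(1) j by simp
  thus ?thesis unfolding FDphi .
qed

lemma D_Rphi: "j < n \<Longrightarrow> D *\<^sub>v col Rphi j = 0\<^sub>v n"
proof -
  assume j: "j < n"
  have "D *\<^sub>v col Rphi j = (D * Dphi) *\<^sub>v col Vphi j"
    unfolding colRphi[OF j] using Dc Dphic Vphi(1) j by simp
  moreover have "col Vphi j \<in> carrier_vec n" using Vphi(1) by auto
  hence "0\<^sub>m n n *\<^sub>v col Vphi j = 0\<^sub>v n" by (intro eq_vecI) auto
  ultimately show ?thesis unfolding DDphi by simp
qed

lemma F_Dphi_vec: "w \<in> carrier_vec n \<Longrightarrow> F *\<^sub>v (Dphi *\<^sub>v w) = D' *\<^sub>v w"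
  using FDphi F_carrier Dphic by (metis assoc_mult_mat_vec)

lemma G_F_vec: "x \<in> carrier_vec n \<Longrightarrow> G *\<^sub>v (F *\<^sub>v x) = x"
  using G_inv F_carrier by (metis assoc_mult_mat_vec one_mult_mat_vec)

lemma G_D'_vec: "w \<in> carrier_vec n \<Longrightarrow> G *\<^sub>v (D' *\<^sub>v w) = Dphi *\<^sub>v w"
  using GD' Gc D'c by (metis assoc_mult_mat_vec)

lemma piv_pv: "X \<in> carrier_mat n n \<Longrightarrow> j < n \<Longrightarrow> piv X j = pv n (col X j)"
  unfolding piv_def pv_def by (rule arg_cong[where f = Max]) auto

lemma reduced_pv:
  assumes X: "X \<in> carrier_mat n n" "reduced X" and j: "j1 < n" "j2 < n" "j1 \<noteq> j2"
    "col X j1 \<noteq> 0\<^sub>v n" "col X j2 \<noteq> 0\<^sub>v n"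
  shows "pv n (col X j1) \<noteq> pv n (col X j2)"
  using X j unfolding reduced_def piv_pv[OF X(1) j(1), symmetric] piv_pv[OF X(1) j(2), symmetric] by auto

lemma pivs_iff: "b \<in> pivs Rphi \<longleftrightarrow> (\<exists>j<n. col Rphi j \<noteq> 0\<^sub>v n \<and> pv n (col Rphi j) = b)"
proof
  assume "b \<in> pivs Rphi"
  then obtain j where j: "j < dim_col Rphi" "col Rphi j \<noteq> 0\<^sub>v (dim_row Rphi)" "b = piv Rphi j"
    unfolding pivs_def by blast
  thus "\<exists>j<n. col Rphi j \<noteq> 0\<^sub>v n \<and> pv n (col Rphi j) = b" using Rphic piv_pv[OF Rphic] by auto
next
  assume "\<exists>j<n. col Rphi j \<noteq> 0\<^sub>v n \<and> pv n (col Rphi j) = b"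
  then obtain j where j: "j < n" "col Rphi j \<noteq> 0\<^sub>v n" "pv n (col Rphi j) = b" by blast
  hence "j < dim_col Rphi \<and> col Rphi j \<noteq> 0\<^sub>v (dim_row Rphi) \<and> b = piv Rphi j"
    using Rphic piv_pv[OF Rphic] by auto
  thus "b \<in> pivs Rphi" unfolding pivs_def by blast
qed

end



context thm_setup begin

definition "Ibar j = supp N Cf (col Rphi j) - supp N C'f (col Vphi j)"
definition "Pl = filter (\<lambda>j. col Rphi j \<noteq> 0\<^sub>v n \<and> Ibar j \<noteq> {}) [0..<n]"
definition "El = filter (\<lambda>i. col R i = 0\<^sub>v n \<and> i \<notin> pivs Rphi) [0..<n]"
definition "idx = map Inl Pl @ map Inr El"
definition "lab \<beta> = (case \<beta> of Inl j \<Rightarrow> Ibar j | Inr i \<Rightarrow> supp N Cf (col V i))"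
definition "rep \<beta> = (case \<beta> of Inl j \<Rightarrow> col Rphi j | Inr i \<Rightarrow> col V i)"
definition "Lb = map lab idx"
definition "kk = length idx"
definition "Z = mat_of_cols n (map rep idx)"

lemma idx_cases:
  "\<beta> \<in> set idx \<longleftrightarrow> (\<exists>j. \<beta> = Inl j \<and> j < n \<and> col Rphi j \<noteq> 0\<^sub>v n \<and> Ibar j \<noteq> {}) \<or>
     (\<exists>i. \<beta> = Inr i \<and> i < n \<and> col R i = 0\<^sub>v n \<and> i \<notin> pivs Rphi)"
  unfolding idx_def Pl_def El_def by auto

lemma distinct_idx: "distinct idx"
  unfolding idx_def Pl_def El_def by (auto simp: distinct_map inj_on_def)

lemma mset_Lb:
  "mset Lb = image_mset (\<lambda>j. supp N Cf (col Rphi j) - supp N C'f (col Vphi j))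
        (filter_mset (\<lambda>j. col Rphi j \<noteq> 0\<^sub>v n \<and>
                            supp N Cf (col Rphi j) - supp N C'f (col Vphi j) \<noteq> {})
           (mset [0..<n]))
      + image_mset (\<lambda>i. supp N Cf (col V i))
        (filter_mset (\<lambda>i. col R i = 0\<^sub>v n \<and> i \<notin> pivs Rphi) (mset [0..<n]))"
  unfolding Lb_def idx_def Pl_def El_def Ibar_def lab_def
  by (simp add: mset_filter comp_def)

lemma rep_car: "\<beta> \<in> set idx \<Longrightarrow> rep \<beta> \<in> carrier_vec n"
  unfolding idx_cases rep_def using Rphic V(1) by auto

lemma rep_nz: "\<beta> \<in> set idx \<Longrightarrow> rep \<beta> \<noteq> 0\<^sub>v n"
  unfolding idx_cases rep_def using ut_col_pv(2)[OF V] by auto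

lemma rep_D: "\<beta> \<in> set idx \<Longrightarrow> D *\<^sub>v rep \<beta> = 0\<^sub>v n"
  unfolding idx_cases rep_def using D_Rphi colR by auto

lemma rep_mem: "\<beta> \<in> set idx \<Longrightarrow> t \<in> lab \<beta> \<Longrightarrow> rep \<beta> \<in> Cf t"
  unfolding idx_cases rep_def lab_def Ibar_def supp_def by auto

lemma rep_die:
  assumes b: "\<beta> \<in> set idx" and st: "s \<le> t" "t \<le> N" and s: "s \<in> lab \<beta>" and t: "t \<notin> lab \<beta>"
  shows "F *\<^sub>v rep \<beta> \<in> boundaries D' (C'f t)"
proof -
  from b consider (l) j where "\<beta> = Inl j" "j < n" | (r) i where "\<beta> = Inr i" "i < n"
    unfolding idx_cases by auto
  thus ?thesis
  proof cases
    case l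
    have s1: "s \<in> supp N Cf (col Rphi j)" using s l unfolding lab_def Ibar_def by auto
    have t1: "t \<in> supp N Cf (col Rphi j)" by (rule supp_up[OF filtC s1 st])
    have "t \<in> supp N C'f (col Vphi j)" using t t1 l unfolding lab_def Ibar_def by auto
    hence v: "col Vphi j \<in> C'f t" unfolding supp_def by auto
    have "F *\<^sub>v rep \<beta> = D' *\<^sub>v col Vphi j" unfolding l rep_def using F_Rphi[OF l(2)] by simp
    thus ?thesis unfolding boundaries_def using v by auto
  next
    case r
    have "s \<in> supp N Cf (col V i)" using s r unfolding lab_def by auto
    hence "t \<in> supp N Cf (col V i)" by (rule supp_up[OF filtC _ st])
    hence False using t r unfolding lab_def by auto
    thus ?thesis ..
  qed
qed

lemma rep_pv_l: "j < n \<Longrightarrow> pv n (rep (Inl j)) = pv n (col Rphi j)"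
  unfolding rep_def by simp
lemma rep_pv_r: "i < n \<Longrightarrow> pv n (rep (Inr i)) = i"
  unfolding rep_def using ut_col_pv(1)[OF V] by simp

lemma pv_inj: "inj_on (\<lambda>\<beta>. pv n (rep \<beta>)) (set idx)"
proof (rule inj_onI)
  fix b1 b2 assume b1: "b1 \<in> set idx" and b2: "b2 \<in> set idx" and eq: "pv n (rep b1) = pv n (rep b2)"
  show "b1 = b2"
  proof (rule ccontr)
    assume ne: "b1 \<noteq> b2"
    have lr: False if "j < n" "col Rphi j \<noteq> 0\<^sub>v n" "i < n" "i \<notin> pivs Rphi"
      "pv n (col Rphi j) = i" for i j
      using that pivs_iff by auto
    from b1 b2 show False unfolding idx_cases
    proof (elim disjE exE conjE)
      fix j1 j2 assume *: "b1 = Inl j1" "j1 < n" "col Rphi j1 \<noteq> 0\<^sub>v n" "b2 = Inl j2" "j2 < n" "col Rphi j2 \<noteq> 0\<^sub>v n"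
      hence "pv n (col Rphi j1) \<noteq> pv n (col Rphi j2)"
        using reduced_pv[OF Rphic Rphi(2)] ne by auto
      thus False using eq * by (simp add: rep_def)
    next
      fix i1 i2 assume *: "b1 = Inr i1" "i1 < n" "b2 = Inr i2" "i2 < n"
      thus False using eq ne rep_pv_r by auto
    next
      fix j i assume *: "b1 = Inl j" "j < n" "col Rphi j \<noteq> 0\<^sub>v n" "b2 = Inr i" "i < n" "i \<notin> pivs Rphi"
      thus False using eq rep_pv_r rep_pv_l lr by auto
    next
      fix j i assume *: "b2 = Inl j" "j < n" "col Rphi j \<noteq> 0\<^sub>v n" "b1 = Inr i" "i < n" "i \<notin> pivs Rphi"
      thus False using eq rep_pv_r rep_pv_l lr by auto
    qed
  qed
qed

lemma lab_interval: "\<beta> \<in> set idx \<Longrightarrow> is_interval N (lab \<beta>)"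
proof -
  assume b: "\<beta> \<in> set idx"
  have conv: "c \<in> supp N X v" if "is_filtration n N X" "a \<in> supp N X v" "a \<le> c" "c \<le> N" for X v a c
    using supp_up[OF that] .
  from b consider (l) j where "\<beta> = Inl j" "j < n" "Ibar j \<noteq> {}" | (r) i where "\<beta> = Inr i" "i < n"
    unfolding idx_cases by auto
  thus ?thesis
  proof cases
    case l
    show ?thesis unfolding is_interval_def lab_def l
    proof (intro conjI ballI allI impI)
      show "(case Inl j of Inl j \<Rightarrow> Ibar j | Inr i \<Rightarrow> supp N Cf (col V i)) \<noteq> {}" using l by simp
      show "(case Inl j of Inl j \<Rightarrow> Ibar j | Inr i \<Rightarrow> supp N Cf (col V i)) \<subseteq> {0..N}"
        unfolding Ibar_def supp_def by auto
      fix a b c assume a: "a \<in> (case Inl j of Inl j \<Rightarrow> Ibar j | Inr i \<Rightarrow> supp N Cf (col V i))"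
        and bb: "b \<in> (case Inl j of Inl j \<Rightarrow> Ibar j | Inr i \<Rightarrow> supp N Cf (col V i))"
        and c: "a \<le> c \<and> c \<le> b"
      have bN: "b \<le> N" using bb unfolding Ibar_def supp_def by auto
      have "c \<in> supp N Cf (col Rphi j)" using conv[OF filtC, of a "col Rphi j" c] a c bN unfolding Ibar_def by auto
      moreover have "c \<notin> supp N C'f (col Vphi j)"
        using conv[OF filtC', of c "col Vphi j" b] bb c bN unfolding Ibar_def by auto
      ultimately show "c \<in> (case Inl j of Inl j \<Rightarrow> Ibar j | Inr i \<Rightarrow> supp N Cf (col V i))"
        unfolding Ibar_def by simp
    qed
  next
    case r
    show ?thesis unfolding is_interval_def lab_def r
    proof (intro conjI ballI allI impI)
      have "N \<in> supp N Cf (col V i)" unfolding supp_def using filt_top[OF filtC] V(1) by auto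
      thus "(case Inr i of Inl j \<Rightarrow> Ibar j | Inr i \<Rightarrow> supp N Cf (col V i)) \<noteq> {}" by auto
      show "(case Inr i of Inl j \<Rightarrow> Ibar j | Inr i \<Rightarrow> supp N Cf (col V i)) \<subseteq> {0..N}"
        unfolding supp_def by auto
      fix a b c assume a: "a \<in> (case Inr i of Inl j \<Rightarrow> Ibar j | Inr i \<Rightarrow> supp N Cf (col V i))"
        and bb: "b \<in> (case Inr i of Inl j \<Rightarrow> Ibar j | Inr i \<Rightarrow> supp N Cf (col V i))"
        and c: "a \<le> c \<and> c \<le> b"
      have bN: "b \<le> N" using bb unfolding supp_def by auto
      show "c \<in> (case Inr i of Inl j \<Rightarrow> Ibar j | Inr i \<Rightarrow> supp N Cf (col V i))"
        using conv[OF filtC, of a "col V i" c] a c bN by auto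
    qed
  qed
qed

lemma kk_Lb: "length Lb = kk" unfolding Lb_def kk_def by simp
lemma Lb_nth: "\<alpha> < kk \<Longrightarrow> Lb ! \<alpha> = lab (idx ! \<alpha>)" unfolding Lb_def kk_def by simp
lemma idx_nth: "\<alpha> < kk \<Longrightarrow> idx ! \<alpha> \<in> set idx" unfolding kk_def by simp

lemma Zc: "Z \<in> carrier_mat n kk" unfolding Z_def kk_def using mat_of_cols_carrier(1)[of n "map rep idx"] by simp
lemma colZ: "\<alpha> < kk \<Longrightarrow> col Z \<alpha> = rep (idx ! \<alpha>)"
  unfolding Z_def kk_def using rep_car by (subst col_mat_of_cols) auto

lemma Z_coord:
  assumes i: "i < n" and a: "a \<in> carrier_vec kk"
  shows "(Z *\<^sub>v a) $ i = (\<Sum>\<alpha>\<in>{0..<kk}. rep (idx ! \<alpha>) $ i * a $ \<alpha>)"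
proof -
  have "(Z *\<^sub>v a) $ i = (\<Sum>\<alpha>\<in>{0..<kk}. Z $$ (i, \<alpha>) * a $ \<alpha>)"
    using i a Zc by (auto simp: scalar_prod_def)
  also have "\<dots> = (\<Sum>\<alpha>\<in>{0..<kk}. rep (idx ! \<alpha>) $ i * a $ \<alpha>)"
  proof (rule sum.cong[OF refl])
    fix \<alpha> assume "\<alpha> \<in> {0..<kk}"
    hence "\<alpha> < kk" by simp
    hence "Z $$ (i, \<alpha>) = col Z \<alpha> $ i" using i Zc by simp
    thus "Z $$ (i, \<alpha>) * a $ \<alpha> = rep (idx ! \<alpha>) $ i * a $ \<alpha>" using colZ \<open>\<alpha> < kk\<close> by simp
  qed
  finally show ?thesis .
qed

end



lemma ker_lsub:
  fixes D :: "'a::field mat"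
  assumes D: "D \<in> carrier_mat n n"
  shows "lsub n {v \<in> carrier_vec n. D *\<^sub>v v = 0\<^sub>v n}"
  unfolding lsub_def
proof (intro conjI ballI allI)
  show "0\<^sub>v n \<in> {v \<in> carrier_vec n. D *\<^sub>v v = 0\<^sub>v n}" using D by (auto intro!: eq_vecI)
  fix x y assume x: "x \<in> {v \<in> carrier_vec n. D *\<^sub>v v = 0\<^sub>v n}" and y: "y \<in> {v \<in> carrier_vec n. D *\<^sub>v v = 0\<^sub>v n}"
  thus "x + y \<in> {v \<in> carrier_vec n. D *\<^sub>v v = 0\<^sub>v n}"
    using D by (auto simp: mult_add_distrib_mat_vec)
next
  fix c x assume x: "x \<in> {v \<in> carrier_vec n. D *\<^sub>v v = 0\<^sub>v n}"
  thus "c \<cdot>\<^sub>v x \<in> {v \<in> carrier_vec n. D *\<^sub>v v = 0\<^sub>v n}"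
    using D by (auto simp: mult_mat_vec)
qed auto

context thm_setup begin

definition "Mcar t = {a \<in> carrier_vec kk. \<forall>\<alpha><kk. a $ \<alpha> \<noteq> 0 \<longrightarrow> t \<in> lab (idx ! \<alpha>)}"

lemma Mt_carrier: "carrier (int_sum_mod TYPE('a) Lb t) = Mcar t"
  unfolding int_sum_mod_def Mcar_def kk_Lb using Lb_nth by auto

lemma Mcar_lsub: "lsub kk (Mcar t)"
  unfolding lsub_def Mcar_def by auto

lemma Z_cyc:
  assumes t: "t \<le> N" and a: "a \<in> Mcar t"
  shows "Z *\<^sub>v a \<in> Cf t" "D *\<^sub>v (Z *\<^sub>v a) = 0\<^sub>v n"
proof -
  have ac: "a \<in> carrier_vec kk" using a unfolding Mcar_def by auto
  show "Z *\<^sub>v a \<in> Cf t"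
  proof (rule lincomb_mem[OF filt_lsub[OF filtC t] Zc ac])
    fix \<alpha> assume "\<alpha> < kk" "a $ \<alpha> \<noteq> 0"
    thus "col Z \<alpha> \<in> Cf t" using a colZ rep_mem idx_nth unfolding Mcar_def by auto
  qed
  have "Z *\<^sub>v a \<in> {v \<in> carrier_vec n. D *\<^sub>v v = 0\<^sub>v n}"
  proof (rule lincomb_mem[OF ker_lsub[OF Dc] Zc ac])
    fix \<alpha> assume "\<alpha> < kk" "a $ \<alpha> \<noteq> 0"
    thus "col Z \<alpha> \<in> {v \<in> carrier_vec n. D *\<^sub>v v = 0\<^sub>v n}" using colZ rep_D rep_car idx_nth by auto
  qed
  thus "D *\<^sub>v (Z *\<^sub>v a) = 0\<^sub>v n" by simp
qed

lemma Vu_coord: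
  fixes X :: "'a mat"
  assumes X: "X \<in> carrier_mat n n" and u: "u \<in> carrier_vec n" and x: "x < n"
  shows "(X *\<^sub>v u) $ x = (\<Sum>i\<in>{0..<n}. col X i $ x * u $ i)"
  using X u x by (auto simp: scalar_prod_def intro!: sum.cong)

lemma colR_zero:
  assumes z: "z \<in> carrier_vec n" and Dz: "D *\<^sub>v z = 0\<^sub>v n" and b: "b < n" and zb: "z $ b \<noteq> 0"
    and zs: "\<And>i. b < i \<Longrightarrow> i < n \<Longrightarrow> z $ i = 0"
  shows "col R b = 0\<^sub>v n"
proof (rule ccontr)
  assume nz: "col R b \<noteq> 0\<^sub>v n"
  obtain u where u: "u \<in> carrier_vec n" "V *\<^sub>v u = z" "\<forall>i. Suc b \<le> i \<longrightarrow> i < n \<longrightarrow> u $ i = 0"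
    using ut_decomp[OF V z, of "Suc b"] zs by auto
  have ub: "u $ b \<noteq> 0"
  proof
    assume u0: "u $ b = 0"
    have "z $ b = (\<Sum>i\<in>{0..<n}. col V i $ b * u $ i)" using Vu_coord[OF V(1) u(1) b] u(2) by simp
    also have "\<dots> = 0"
    proof (rule sum.neutral, intro ballI)
      fix i assume i: "i \<in> {0..<n}"
      show "col V i $ b * u $ i = 0"
      proof (cases "i < b")
        case True thus ?thesis using ut_col_zero[OF V(1,2) True b] by simp
      next
        case False thus ?thesis using u0 u(3) i by (cases "i = b") auto
      qed
    qed
    finally show False using zb by simp
  qed
  have Ru: "R *\<^sub>v u = 0\<^sub>v n" unfolding R(1) using Dc V(1) u Dz by simp
  let ?S = "{i \<in> {0..<n}. col R i \<noteq> 0\<^sub>v n}"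
  have "\<forall>i\<in>?S. u $ i = 0"
  proof (rule indep_pv[where x = "\<lambda>i. col R i" and n = n])
    show "finite ?S" by simp
    show "\<And>s. s \<in> ?S \<Longrightarrow> col R s \<in> carrier_vec n" using Rc by auto
    show "\<And>s. s \<in> ?S \<Longrightarrow> col R s \<noteq> 0\<^sub>v n" by auto
    show "inj_on (\<lambda>s. pv n (col R s)) ?S"
      using reduced_pv[OF Rc R(2)] by (auto simp: inj_on_def)
    fix x assume x: "x < n"
    have "(\<Sum>s\<in>?S. u $ s * col R s $ x) = (\<Sum>s\<in>{0..<n}. col R s $ x * u $ s)"
      by (rule sum.mono_neutral_cong_left) (auto simp: x)
    also have "\<dots> = (R *\<^sub>v u) $ x" using Vu_coord[OF Rc u(1) x] by simp
    finally show "(\<Sum>s\<in>?S. u $ s * col R s $ x) = 0" using Ru x by simp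
  qed
  thus False using ub nz b by auto
qed

lemma decomp_step:
  assumes t: "t \<le> N" and z: "z \<in> Cf t" and Dz: "D *\<^sub>v z = 0\<^sub>v n" and b: "b < n"
    and zs: "\<And>i. b < i \<Longrightarrow> i < n \<Longrightarrow> z $ i = 0"
    and r: "r \<in> Cf t" "D *\<^sub>v r = 0\<^sub>v n" "r $ b \<noteq> 0" "\<And>i. b < i \<Longrightarrow> i < n \<Longrightarrow> r $ i = 0"
    and case_r: "(\<exists>v \<in> C'f t. r = Dphi *\<^sub>v v) \<or> (\<exists>\<alpha><kk. rep (idx ! \<alpha>) = r \<and> t \<in> lab (idx ! \<alpha>))"
    and IH: "\<And>z'. z' \<in> Cf t \<Longrightarrow> D *\<^sub>v z' = 0\<^sub>v n \<Longrightarrow> (\<And>i. b \<le> i \<Longrightarrow> i < n \<Longrightarrow> z' $ i = 0) \<Longrightarrow>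
       \<exists>a\<in>Mcar t. \<exists>w\<in>C'f t. z' = Z *\<^sub>v a + Dphi *\<^sub>v w"
  shows "\<exists>a\<in>Mcar t. \<exists>w\<in>C'f t. z = Z *\<^sub>v a + Dphi *\<^sub>v w"
proof -
  have Ct: "lsub n (Cf t)" by (rule filt_lsub[OF filtC t])
  have C't: "lsub n (C'f t)" by (rule filt_lsub[OF filtC' t])
  have zc: "z \<in> carrier_vec n" and rc: "r \<in> carrier_vec n" using z r(1) lsub_carrier[OF Ct] by auto
  define c where "c = z $ b / r $ b"
  define z' where "z' = z - c \<cdot>\<^sub>v r"
  have z'c: "z' \<in> Cf t" unfolding z'_def by (rule lsub_minus[OF Ct z lsub_smult[OF Ct r(1)]])
  have "D *\<^sub>v z' = D *\<^sub>v z - c \<cdot>\<^sub>v (D *\<^sub>v r)" unfolding z'_def using Dc zc rc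
    by (simp add: mult_minus_distrib_mat_vec mult_mat_vec)
  hence Dz': "D *\<^sub>v z' = 0\<^sub>v n" using Dz r(2) by (intro eq_vecI) auto
  have "\<exists>a\<in>Mcar t. \<exists>w\<in>C'f t. z' = Z *\<^sub>v a + Dphi *\<^sub>v w"
  proof (rule IH[OF z'c Dz'])
    fix i assume i: "b \<le> i" "i < n"
    show "z' $ i = 0"
    proof (cases "i = b")
      case True thus ?thesis unfolding z'_def c_def using zc rc i r(3) by auto
    next
      case False thus ?thesis unfolding z'_def using zc rc i zs r(4) by auto
    qed
  qed
  then obtain a' w' where a': "a' \<in> Mcar t" and w': "w' \<in> C'f t" and e: "z' = Z *\<^sub>v a' + Dphi *\<^sub>v w'" by blast
  have a'c: "a' \<in> carrier_vec kk" using a' unfolding Mcar_def by auto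
  have w'c: "w' \<in> carrier_vec n" using w' lsub_carrier[OF C't] by auto
  have zz: "z = z' + c \<cdot>\<^sub>v r" unfolding z'_def using zc rc by (intro eq_vecI) auto
  from case_r show ?thesis
  proof (elim disjE bexE exE conjE)
    fix v assume v: "v \<in> C'f t" "r = Dphi *\<^sub>v v"
    have vc: "v \<in> carrier_vec n" using v lsub_carrier[OF C't] by auto
    have "Dphi *\<^sub>v (w' + c \<cdot>\<^sub>v v) = Dphi *\<^sub>v w' + c \<cdot>\<^sub>v r"
      unfolding v(2) using Dphic vc w'c by (simp add: mult_add_distrib_mat_vec mult_mat_vec)
    hence "z = Z *\<^sub>v a' + Dphi *\<^sub>v (w' + c \<cdot>\<^sub>v v)"
      unfolding zz e using Zc a'c Dphic w'c rc by (intro eq_vecI) auto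
    moreover have "w' + c \<cdot>\<^sub>v v \<in> C'f t" using lsub_add[OF C't w' lsub_smult[OF C't v(1)]] .
    ultimately show ?thesis using a' by blast
  next
    fix \<alpha> assume al: "\<alpha> < kk" "rep (idx ! \<alpha>) = r" "t \<in> lab (idx ! \<alpha>)"
    define a where "a = a' + c \<cdot>\<^sub>v unit_vec kk \<alpha>"
    have "a \<in> Mcar t" unfolding a_def Mcar_def using a' al unfolding Mcar_def by auto
    moreover have "Z *\<^sub>v a = Z *\<^sub>v a' + c \<cdot>\<^sub>v r"
    proof -
      have "Z *\<^sub>v a = Z *\<^sub>v a' + Z *\<^sub>v (c \<cdot>\<^sub>v unit_vec kk \<alpha>)"
        unfolding a_def using Zc a'c by (intro mult_add_distrib_mat_vec) auto
      also have "Z *\<^sub>v (c \<cdot>\<^sub>v unit_vec kk \<alpha>) = c \<cdot>\<^sub>v (Z *\<^sub>v unit_vec kk \<alpha>)"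
        using Zc by (intro mult_mat_vec) auto
      also have "Z *\<^sub>v unit_vec kk \<alpha> = col Z \<alpha>" using Zc al(1) by (intro eq_vecI) auto
      also have "col Z \<alpha> = r" using colZ al by simp
      finally show ?thesis .
    qed
    hence "z = Z *\<^sub>v a + Dphi *\<^sub>v w'"
      unfolding zz e using Zc a'c Dphic w'c rc by (intro eq_vecI) auto
    ultimately show ?thesis using w' by blast
  qed
qed

lemma decomp_ind:
  assumes t: "t \<le> N"
  shows "z \<in> Cf t \<Longrightarrow> D *\<^sub>v z = 0\<^sub>v n \<Longrightarrow> (\<And>i. b \<le> i \<Longrightarrow> i < n \<Longrightarrow> z $ i = 0) \<Longrightarrow>
    \<exists>a\<in>Mcar t. \<exists>w\<in>C'f t. z = Z *\<^sub>v a + Dphi *\<^sub>v w"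
proof (induction b arbitrary: z)
  case 0
  have "z \<in> carrier_vec n" using 0 filt_lsub[OF filtC t] lsub_carrier by blast
  hence "z = Z *\<^sub>v 0\<^sub>v kk + Dphi *\<^sub>v 0\<^sub>v n" using 0 Zc Dphic by (intro eq_vecI) auto
  moreover have "0\<^sub>v kk \<in> Mcar t" unfolding Mcar_def by auto
  moreover have "0\<^sub>v n \<in> C'f t" using lsub_zero[OF filt_lsub[OF filtC' t]] .
  ultimately show ?case by blast
next
  case (Suc b)
  have Ct: "lsub n (Cf t)" by (rule filt_lsub[OF filtC t])
  have zc: "z \<in> carrier_vec n" using Suc.prems(1) lsub_carrier[OF Ct] by auto
  show ?case
  proof (cases "b < n \<and> z $ b \<noteq> 0")
    case False
    hence "\<And>i. b \<le> i \<Longrightarrow> i < n \<Longrightarrow> z $ i = 0" using Suc.prems(3)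
      by (metis Suc_leI le_neq_implies_less)
    thus ?thesis using Suc.IH[OF Suc.prems(1,2)] by blast
  next
    case True
    hence b: "b < n" and zb: "z $ b \<noteq> 0" by auto
    have zs: "\<And>i. b < i \<Longrightarrow> i < n \<Longrightarrow> z $ i = 0" using Suc.prems(3) by auto
    note IH = Suc.IH
    show ?thesis
    proof (cases "b \<in> pivs Rphi")
      case True
      then obtain j where j: "j < n" "col Rphi j \<noteq> 0\<^sub>v n" "pv n (col Rphi j) = b"
        using pivs_iff by auto
      let ?r = "col Rphi j"
      have rc: "?r \<in> carrier_vec n" using Rphic by auto
      have rs: "\<And>i. b < i \<Longrightarrow> i < n \<Longrightarrow> ?r $ i = 0" using pv_props(3)[OF rc j(2)] j(3) by auto
      have rb: "?r $ b \<noteq> 0" using pv_props(2)[OF rc j(2)] j(3) by auto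
      have rC: "?r \<in> Cf t" by (rule mem_below[OF filtC basisC t Suc.prems(1) b zb rc rs])
      have Dr: "D *\<^sub>v ?r = 0\<^sub>v n" using D_Rphi[OF j(1)] .
      have cr: "(\<exists>v \<in> C'f t. ?r = Dphi *\<^sub>v v) \<or> (\<exists>\<alpha><kk. rep (idx ! \<alpha>) = ?r \<and> t \<in> lab (idx ! \<alpha>))"
      proof (cases "col Vphi j \<in> C'f t")
        case True thus ?thesis using colRphi[OF j(1)] by blast
      next
        case False
        have tI: "t \<in> Ibar j" unfolding Ibar_def supp_def using t rC False by auto
        hence "Inl j \<in> set idx" unfolding idx_cases using j by auto
        then obtain \<alpha> where al: "\<alpha> < kk" "idx ! \<alpha> = Inl j" unfolding kk_def by (metis in_set_conv_nth)
        thus ?thesis using tI unfolding rep_def lab_def by auto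
      qed
      show ?thesis by (rule decomp_step[OF t Suc.prems(1,2) b zs rC Dr rb rs cr IH])
    next
      case False
      have cR: "col R b = 0\<^sub>v n" by (rule colR_zero[OF zc Suc.prems(2) b zb zs])
      let ?r = "col V b"
      have rc: "?r \<in> carrier_vec n" using V(1) by auto
      have rs: "\<And>i. b < i \<Longrightarrow> i < n \<Longrightarrow> ?r $ i = 0" using ut_col_zero[OF V(1,2)] by auto
      have rb: "?r $ b \<noteq> 0" using ut_diag[OF V b] V(1) b by auto
      have rC: "?r \<in> Cf t" by (rule mem_below[OF filtC basisC t Suc.prems(1) b zb rc rs])
      have Dr: "D *\<^sub>v ?r = 0\<^sub>v n" using colR[OF b] cR by simp
      have "Inr b \<in> set idx" unfolding idx_cases using b cR False by auto
      then obtain \<alpha> where al: "\<alpha> < kk" "idx ! \<alpha> = Inr b" unfolding kk_def by (metis in_set_conv_nth)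
      have "t \<in> supp N Cf ?r" unfolding supp_def using t rC by auto
      hence cr: "(\<exists>v \<in> C'f t. ?r = Dphi *\<^sub>v v) \<or> (\<exists>\<alpha><kk. rep (idx ! \<alpha>) = ?r \<and> t \<in> lab (idx ! \<alpha>))"
        using al unfolding rep_def lab_def by auto
      show ?thesis by (rule decomp_step[OF t Suc.prems(1,2) b zs rC Dr rb rs cr IH])
    qed
  qed
qed

lemma decomp:
  assumes t: "t \<le> N" and z: "z \<in> Cf t" and Dz: "D *\<^sub>v z = 0\<^sub>v n"
  shows "\<exists>a\<in>Mcar t. \<exists>w\<in>C'f t. z = Z *\<^sub>v a + Dphi *\<^sub>v w"
  by (rule decomp_ind[OF t z Dz, of n]) auto

end



context thm_setup begin

lemma Vphi_decomp:
  assumes t: "t \<le> N" and w: "w \<in> C'f t"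
  shows "\<exists>u\<in>carrier_vec n. Vphi *\<^sub>v u = w \<and> (\<forall>j<n. u $ j \<noteq> 0 \<longrightarrow> col Vphi j \<in> C'f t)"
proof -
  have C't: "lsub n (C'f t)" by (rule filt_lsub[OF filtC' t])
  have wc: "w \<in> carrier_vec n" using w lsub_carrier[OF C't] by auto
  show ?thesis
  proof (cases "w = 0\<^sub>v n")
    case True
    have "Vphi *\<^sub>v 0\<^sub>v n = w" using True Vphi(1) by (intro eq_vecI) auto
    thus ?thesis by (intro bexI[of _ "0\<^sub>v n"]) auto
  next
    case False
    let ?p = "pv n w"
    have p: "?p < n" "w $ ?p \<noteq> 0" "\<And>i. ?p < i \<Longrightarrow> i < n \<Longrightarrow> w $ i = 0" using pv_props[OF wc False] by auto
    obtain u where u: "u \<in> carrier_vec n" "Vphi *\<^sub>v u = w" "\<forall>i. Suc ?p \<le> i \<longrightarrow> i < n \<longrightarrow> u $ i = 0"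
      using ut_decomp[OF Vphi wc, of "Suc ?p"] p(3) by auto
    have "\<forall>j<n. u $ j \<noteq> 0 \<longrightarrow> col Vphi j \<in> C'f t"
    proof (intro allI impI)
      fix j assume j: "j < n" "u $ j \<noteq> 0"
      hence jp: "j \<le> ?p" using u(3) by (meson not_less_eq_eq)
      show "col Vphi j \<in> C'f t"
      proof (rule mem_below[OF filtC' basisC' t w p(1,2)])
        show "col Vphi j \<in> carrier_vec n" using Vphi(1) by auto
        fix i assume "?p < i" "i < n"
        thus "col Vphi j $ i = 0" using ut_col_zero[OF Vphi(1,2), of j i] jp by auto
      qed
    qed
    thus ?thesis using u by blast
  qed
qed

lemma inj0:
  assumes t: "t \<le> N" and c: "c \<in> Mcar t" and w: "w \<in> C'f t" and e: "F *\<^sub>v (Z *\<^sub>v c) = D' *\<^sub>v w"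
  shows "c = 0\<^sub>v kk"
proof -
  have C't: "lsub n (C'f t)" by (rule filt_lsub[OF filtC' t])
  have wc: "w \<in> carrier_vec n" using w lsub_carrier[OF C't] by auto
  have cc: "c \<in> carrier_vec kk" using c unfolding Mcar_def by auto
  have Zcc: "Z *\<^sub>v c \<in> carrier_vec n" using Zc cc by auto
  obtain u where u: "u \<in> carrier_vec n" "Vphi *\<^sub>v u = w" "\<forall>j<n. u $ j \<noteq> 0 \<longrightarrow> col Vphi j \<in> C'f t"
    using Vphi_decomp[OF t w] by blast
  have "Z *\<^sub>v c = G *\<^sub>v (F *\<^sub>v (Z *\<^sub>v c))" using G_F_vec[OF Zcc] by simp
  also have "\<dots> = Dphi *\<^sub>v w" unfolding e using G_D'_vec[OF wc] .
  also have "\<dots> = Rphi *\<^sub>v u" unfolding Rphi(1) u(2)[symmetric] using Dphic Vphi(1) u(1) by simp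
  finally have ZR: "Z *\<^sub>v c = Rphi *\<^sub>v u" .
  define A where "A = {\<alpha> \<in> {0..<kk}. c $ \<alpha> \<noteq> 0}"
  define J where "J = {j \<in> {0..<n}. u $ j \<noteq> 0 \<and> col Rphi j \<noteq> 0\<^sub>v n}"
  define S where "S = Inl ` A \<union> Inr ` J"
  define xx where "xx s = (case s of Inl \<alpha> \<Rightarrow> rep (idx ! \<alpha>) | Inr j \<Rightarrow> col Rphi j)" for s
  define cf where "cf s = (case s of Inl \<alpha> \<Rightarrow> c $ \<alpha> | Inr j \<Rightarrow> - u $ j)" for s
  have "\<forall>s\<in>S. cf s = 0"
  proof (rule indep_pv[where x = xx and n = n])
    show "finite S" unfolding S_def A_def J_def by auto
    show "\<And>s. s \<in> S \<Longrightarrow> xx s \<in> carrier_vec n"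
      unfolding S_def A_def J_def xx_def using rep_car idx_nth Rphic by auto
    show "\<And>s. s \<in> S \<Longrightarrow> xx s \<noteq> 0\<^sub>v n"
      unfolding S_def A_def J_def xx_def using rep_nz idx_nth by auto
    show "inj_on (\<lambda>s. pv n (xx s)) S"
    proof (rule inj_onI)
      fix s1 s2 assume s1: "s1 \<in> S" and s2: "s2 \<in> S" and eq: "pv n (xx s1) = pv n (xx s2)"
      have LL: "\<alpha>1 = \<alpha>2" if "\<alpha>1 \<in> A" "\<alpha>2 \<in> A" "pv n (rep (idx ! \<alpha>1)) = pv n (rep (idx ! \<alpha>2))" for \<alpha>1 \<alpha>2
      proof -
        have "idx ! \<alpha>1 = idx ! \<alpha>2" using pv_inj that idx_nth unfolding A_def inj_on_def by auto
        thus ?thesis using distinct_idx that unfolding A_def kk_def by (simp add: nth_eq_iff_index_eq)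
      qed
      have RR: "j1 = j2" if "j1 \<in> J" "j2 \<in> J" "pv n (col Rphi j1) = pv n (col Rphi j2)" for j1 j2
        using reduced_pv[OF Rphic Rphi(2)] that unfolding J_def by auto
      have LR: False if "\<alpha> \<in> A" "j \<in> J" "pv n (rep (idx ! \<alpha>)) = pv n (col Rphi j)" for \<alpha> j
      proof -
        have al: "\<alpha> < kk" "c $ \<alpha> \<noteq> 0" using that(1) unfolding A_def by auto
        hence tl: "t \<in> lab (idx ! \<alpha>)" using c unfolding Mcar_def by auto
        have jj: "j < n" "col Vphi j \<in> C'f t" "col Rphi j \<noteq> 0\<^sub>v n" using that(2) u(3) unfolding J_def by auto
        have "idx ! \<alpha> \<in> set idx" using idx_nth al by auto
        then consider (l) j' where "idx ! \<alpha> = Inl j'" "j' < n" "col Rphi j' \<noteq> 0\<^sub>v n"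
          | (r) i where "idx ! \<alpha> = Inr i" "i < n" "i \<notin> pivs Rphi"
          unfolding idx_cases by auto
        thus False
        proof cases
          case l
          have "t \<notin> supp N C'f (col Vphi j')" using tl l unfolding lab_def Ibar_def by auto
          hence "j' \<noteq> j" using jj t unfolding supp_def by auto
          thus False using reduced_pv[OF Rphic Rphi(2) l(2) jj(1) _ l(3) jj(3)] that(3) l rep_pv_l by auto
        next
          case r
          have "pv n (col Rphi j) \<in> pivs Rphi" using pivs_iff jj by auto
          thus False using that(3) r rep_pv_r by auto
        qed
      qed
      from s1 consider (a) a1 where "s1 = Inl a1" "a1 \<in> A" | (b) j1 where "s1 = Inr j1" "j1 \<in> J"
        unfolding S_def by auto
      thus "s1 = s2"
      proof cases
        case a
        from s2 consider (a) a2 where "s2 = Inl a2" "a2 \<in> A" | (b) j2 where "s2 = Inr j2" "j2 \<in> J"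
          unfolding S_def by auto
        thus ?thesis
        proof cases
          case a2: a thus ?thesis using a eq LL[of a1 a2] unfolding xx_def by simp
        next
          case b2: b thus ?thesis using a eq LR[of a1 j2] unfolding xx_def by simp
        qed
      next
        case b
        from s2 consider (a) a2 where "s2 = Inl a2" "a2 \<in> A" | (b) j2 where "s2 = Inr j2" "j2 \<in> J"
          unfolding S_def by auto
        thus ?thesis
        proof cases
          case a2: a thus ?thesis using b eq LR[of a2 j1] unfolding xx_def by simp
        next
          case b2: b thus ?thesis using b eq RR[of j1 j2] unfolding xx_def by simp
        qed
      qed
    qed
    fix x assume x: "x < n"
    have "(\<Sum>s\<in>S. cf s * xx s $ x) = (\<Sum>s\<in>Inl ` A. cf s * xx s $ x) + (\<Sum>s\<in>Inr ` J. cf s * xx s $ x)"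
      unfolding S_def by (rule sum.union_disjoint) (auto simp: A_def J_def)
    also have "(\<Sum>s\<in>Inl ` A. cf s * xx s $ x) = (\<Sum>\<alpha>\<in>A. c $ \<alpha> * rep (idx ! \<alpha>) $ x)"
      by (subst sum.reindex) (auto simp: cf_def xx_def)
    also have "\<dots> = (\<Sum>\<alpha>\<in>{0..<kk}. rep (idx ! \<alpha>) $ x * c $ \<alpha>)"
      unfolding A_def by (rule sum.mono_neutral_cong_left) auto
    also have "\<dots> = (Z *\<^sub>v c) $ x" using Z_coord[OF x cc] by simp
    also have "(\<Sum>s\<in>Inr ` J. cf s * xx s $ x) = (\<Sum>j\<in>J. - (u $ j * col Rphi j $ x))"
      by (subst sum.reindex) (auto simp: cf_def xx_def)
    also have "\<dots> = - (\<Sum>j\<in>J. u $ j * col Rphi j $ x)" by (simp add: sum_negf)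
    also have "(\<Sum>j\<in>J. u $ j * col Rphi j $ x) = (\<Sum>j\<in>{0..<n}. col Rphi j $ x * u $ j)"
      unfolding J_def by (rule sum.mono_neutral_cong_left) (auto simp: x)
    also have "\<dots> = (Rphi *\<^sub>v u) $ x" using Vu_coord[OF Rphic u(1) x] by simp
    finally show "(\<Sum>s\<in>S. cf s * xx s $ x) = 0" unfolding ZR by simp
  qed
  thus ?thesis
  proof (intro eq_vecI)
    fix \<alpha> assume al: "\<alpha> < dim_vec (0\<^sub>v kk)"
    show "c $ \<alpha> = 0\<^sub>v kk $ \<alpha>"
    proof (rule ccontr)
      assume "c $ \<alpha> \<noteq> 0\<^sub>v kk $ \<alpha>"
      hence "Inl \<alpha> \<in> S" "c $ \<alpha> \<noteq> 0" using al unfolding S_def A_def by auto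
      thus False using \<open>\<forall>s\<in>S. cf s = 0\<close> unfolding cf_def by force
    qed
  qed (use cc in auto)
qed

end



context thm_setup begin

definition "Bd t = boundaries D' (C'f t)"
definition "Sg t = (\<lambda>z. F *\<^sub>v z) ` cycles D (Cf t)"
definition "psi t a = hclass (Bd t) (F *\<^sub>v (Z *\<^sub>v a))"
definition "eta t = the_inv_into (Mcar t) (psi t)"
abbreviation "IM t \<equiv> imH_mod n Cf D C'f D' F t"
abbreviation "MT t \<equiv> int_sum_mod TYPE('a) Lb t"

lemma IM_eq: "IM t = quot_mod n (Bd t) (Sg t)"
  unfolding imH_mod_def Bd_def Sg_def ..

lemma IM_car: "carrier (IM t) = hclass (Bd t) ` Sg t"
  unfolding IM_eq quot_simps ..

lemma Bd_lsub: assumes t: "t \<le> N" shows "lsub n (Bd t)"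
proof -
  have C't: "lsub n (C'f t)" by (rule filt_lsub[OF filtC' t])
  note c = lsub_carrier[OF C't]
  show ?thesis unfolding lsub_def Bd_def boundaries_def
  proof (intro conjI ballI allI)
    show "{D' *\<^sub>v v |v. v \<in> C'f t} \<subseteq> carrier_vec n" using D'c c by auto
    have "D' *\<^sub>v 0\<^sub>v n = 0\<^sub>v n" using D'c by (intro eq_vecI) auto
    thus "0\<^sub>v n \<in> {D' *\<^sub>v v |v. v \<in> C'f t}" using lsub_zero[OF C't] by (auto intro!: exI[of _ "0\<^sub>v n"])
    fix x y assume x: "x \<in> {D' *\<^sub>v v |v. v \<in> C'f t}" and y: "y \<in> {D' *\<^sub>v v |v. v \<in> C'f t}"
    then obtain v w where vw: "v \<in> C'f t" "w \<in> C'f t" "x = D' *\<^sub>v v" "y = D' *\<^sub>v w" by auto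
    have "x + y = D' *\<^sub>v (v + w)" unfolding vw using D'c c[OF vw(1)] c[OF vw(2)]
      by (simp add: mult_add_distrib_mat_vec)
    thus "x + y \<in> {D' *\<^sub>v v |v. v \<in> C'f t}" using lsub_add[OF C't vw(1,2)] by auto
  next
    fix a x assume x: "x \<in> {D' *\<^sub>v v |v. v \<in> C'f t}"
    then obtain v where v: "v \<in> C'f t" "x = D' *\<^sub>v v" by auto
    have "a \<cdot>\<^sub>v x = D' *\<^sub>v (a \<cdot>\<^sub>v v)" unfolding v using D'c c[OF v(1)] by (simp add: mult_mat_vec)
    thus "a \<cdot>\<^sub>v x \<in> {D' *\<^sub>v v |v. v \<in> C'f t}" using lsub_smult[OF C't v(1)] by auto
  qed
qed

lemma Bd_mono: "s \<le> t \<Longrightarrow> t \<le> N \<Longrightarrow> Bd s \<subseteq> Bd t"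
  unfolding Bd_def boundaries_def using filt_mono[OF filtC'] by blast

lemma cyc_eq: "cycles D W = {v \<in> W. D *\<^sub>v v = 0\<^sub>v n}"
  unfolding cycles_def using Dc by simp

lemma Sg_lsub: assumes t: "t \<le> N" shows "lsub n (Sg t)"
proof -
  have Ct: "lsub n (Cf t)" by (rule filt_lsub[OF filtC t])
  have K: "lsub n {v \<in> carrier_vec n. D *\<^sub>v v = 0\<^sub>v n}" by (rule ker_lsub[OF Dc])
  note c = lsub_carrier[OF Ct]
  have cyc: "v \<in> cycles D (Cf t) \<longleftrightarrow> v \<in> Cf t \<and> v \<in> {v \<in> carrier_vec n. D *\<^sub>v v = 0\<^sub>v n}" for v
    unfolding cyc_eq using c by auto
  show ?thesis unfolding lsub_def Sg_def
  proof (intro conjI ballI allI)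
    show "(\<lambda>z. F *\<^sub>v z) ` cycles D (Cf t) \<subseteq> carrier_vec n" using F_carrier c by (auto simp: cyc_eq)
    have "F *\<^sub>v 0\<^sub>v n = 0\<^sub>v n" using F_carrier by (intro eq_vecI) auto
    moreover have "0\<^sub>v n \<in> cycles D (Cf t)" unfolding cyc using lsub_zero[OF Ct] lsub_zero[OF K] by auto
    ultimately show "0\<^sub>v n \<in> (\<lambda>z. F *\<^sub>v z) ` cycles D (Cf t)" by (metis image_eqI)
    fix x y assume x: "x \<in> (\<lambda>z. F *\<^sub>v z) ` cycles D (Cf t)" and y: "y \<in> (\<lambda>z. F *\<^sub>v z) ` cycles D (Cf t)"
    then obtain v w where vw: "v \<in> cycles D (Cf t)" "w \<in> cycles D (Cf t)" "x = F *\<^sub>v v" "y = F *\<^sub>v w" by auto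
    have vc: "v \<in> carrier_vec n" "w \<in> carrier_vec n" using vw(1,2) c unfolding cyc by auto
    have "x + y = F *\<^sub>v (v + w)" unfolding vw using F_carrier vc by (simp add: mult_add_distrib_mat_vec)
    moreover have "v + w \<in> cycles D (Cf t)" using vw(1,2) lsub_add[OF Ct] lsub_add[OF K] unfolding cyc by blast
    ultimately show "x + y \<in> (\<lambda>z. F *\<^sub>v z) ` cycles D (Cf t)" by auto
  next
    fix a x assume x: "x \<in> (\<lambda>z. F *\<^sub>v z) ` cycles D (Cf t)"
    then obtain v where v: "v \<in> cycles D (Cf t)" "x = F *\<^sub>v v" by auto
    have vc: "v \<in> carrier_vec n" using v(1) c unfolding cyc by auto
    have "a \<cdot>\<^sub>v x = F *\<^sub>v (a \<cdot>\<^sub>v v)" unfolding v using F_carrier vc by (simp add: mult_mat_vec)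
    moreover have "a \<cdot>\<^sub>v v \<in> cycles D (Cf t)" using v(1) lsub_smult[OF Ct] lsub_smult[OF K] unfolding cyc by blast
    ultimately show "a \<cdot>\<^sub>v x \<in> (\<lambda>z. F *\<^sub>v z) ` cycles D (Cf t)" by auto
  qed
qed

lemma Sg_mono: assumes "s \<le> t" "t \<le> N" shows "Sg s \<subseteq> Sg t"
  unfolding Sg_def cyc_eq using filt_mono[OF filtC assms] by auto

lemma psi_car: assumes t: "t \<le> N" and a: "a \<in> Mcar t" shows "psi t a \<in> carrier (IM t)"
proof -
  have "Z *\<^sub>v a \<in> cycles D (Cf t)" unfolding cyc_eq using Z_cyc[OF t a] by auto
  thus ?thesis unfolding IM_car psi_def Sg_def by auto
qed

lemma FZ_car: "a \<in> carrier_vec kk \<Longrightarrow> F *\<^sub>v (Z *\<^sub>v a) \<in> carrier_vec n"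
  using F_carrier Zc by auto

lemma FZ_add: "a \<in> carrier_vec kk \<Longrightarrow> b \<in> carrier_vec kk \<Longrightarrow>
  F *\<^sub>v (Z *\<^sub>v (a + b)) = F *\<^sub>v (Z *\<^sub>v a) + F *\<^sub>v (Z *\<^sub>v b)"
  using F_carrier Zc by (simp add: mult_add_distrib_mat_vec)

lemma FZ_smult: "a \<in> carrier_vec kk \<Longrightarrow> F *\<^sub>v (Z *\<^sub>v (c \<cdot>\<^sub>v a)) = c \<cdot>\<^sub>v (F *\<^sub>v (Z *\<^sub>v a))"
  using F_carrier Zc by (simp add: mult_mat_vec)

lemma FZ_minus: "a \<in> carrier_vec kk \<Longrightarrow> b \<in> carrier_vec kk \<Longrightarrow>
  F *\<^sub>v (Z *\<^sub>v (a - b)) = F *\<^sub>v (Z *\<^sub>v a) - F *\<^sub>v (Z *\<^sub>v b)"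
  using F_carrier Zc by (simp add: mult_minus_distrib_mat_vec)

lemma psi_add: assumes t: "t \<le> N" and a: "a \<in> carrier_vec kk" and b: "b \<in> carrier_vec kk"
  shows "add (IM t) (psi t a) (psi t b) = psi t (a + b)"
  unfolding IM_eq quot_simps psi_def FZ_add[OF a b] using hclass_add[OF Bd_lsub[OF t] FZ_car[OF a] FZ_car[OF b]] .

lemma psi_smult: assumes t: "t \<le> N" and a: "a \<in> carrier_vec kk"
  shows "smult (IM t) c (psi t a) = psi t (c \<cdot>\<^sub>v a)"
  unfolding IM_eq quot_simps psi_def FZ_smult[OF a] using hclass_smult[OF Bd_lsub[OF t] FZ_car[OF a]] .

lemma psi_surj: assumes t: "t \<le> N" and X: "X \<in> carrier (IM t)" shows "\<exists>a\<in>Mcar t. X = psi t a"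
proof -
  obtain z where z: "z \<in> cycles D (Cf t)" and X: "X = hclass (Bd t) (F *\<^sub>v z)" using X unfolding IM_car Sg_def by auto
  have zz: "z \<in> Cf t" "D *\<^sub>v z = 0\<^sub>v n" using z unfolding cyc_eq by auto
  obtain a w where a: "a \<in> Mcar t" and w: "w \<in> C'f t" and e: "z = Z *\<^sub>v a + Dphi *\<^sub>v w"
    using decomp[OF t zz] by blast
  have ac: "a \<in> carrier_vec kk" using a unfolding Mcar_def by auto
  have wc: "w \<in> carrier_vec n" using w lsub_carrier[OF filt_lsub[OF filtC' t]] by auto
  have zc: "z \<in> carrier_vec n" using zz lsub_carrier[OF filt_lsub[OF filtC t]] by auto
  have "F *\<^sub>v z = F *\<^sub>v (Z *\<^sub>v a) + F *\<^sub>v (Dphi *\<^sub>v w)"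
    unfolding e using F_carrier Zc Dphic ac wc by (simp add: mult_add_distrib_mat_vec)
  hence "F *\<^sub>v z - F *\<^sub>v (Z *\<^sub>v a) = D' *\<^sub>v w" unfolding F_Dphi_vec[OF wc]
    using FZ_car[OF ac] D'c wc F_carrier zc by (intro eq_vecI) auto
  hence d: "F *\<^sub>v z - F *\<^sub>v (Z *\<^sub>v a) \<in> Bd t" unfolding Bd_def boundaries_def using w by auto
  have "X = psi t a" unfolding X psi_def
    by (rule hclass_eqI[OF Bd_lsub[OF t] _ FZ_car[OF ac] d]) (use F_carrier zc in auto)
  thus ?thesis using a by blast
qed

lemma psi_inj: assumes t: "t \<le> N" shows "inj_on (psi t) (Mcar t)"
proof (rule inj_onI)
  fix a b assume a: "a \<in> Mcar t" and b: "b \<in> Mcar t" and e: "psi t a = psi t b"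
  have ac: "a \<in> carrier_vec kk" and bc: "b \<in> carrier_vec kk" using a b unfolding Mcar_def by auto
  have "F *\<^sub>v (Z *\<^sub>v a) - F *\<^sub>v (Z *\<^sub>v b) \<in> Bd t"
    by (rule hclass_eqD[OF Bd_lsub[OF t] FZ_car[OF ac] FZ_car[OF bc]]) (use e in \<open>simp add: psi_def\<close>)
  then obtain w where w: "w \<in> C'f t" and ew: "F *\<^sub>v (Z *\<^sub>v (a - b)) = D' *\<^sub>v w"
    unfolding Bd_def boundaries_def FZ_minus[OF ac bc, symmetric] by auto
  have ab0: "a - b = 0\<^sub>v kk" by (rule inj0[OF t lsub_minus[OF Mcar_lsub a b] w ew])
  show "a = b"
  proof (rule eq_vecI)
    fix i assume i: "i < dim_vec b"
    hence "(a - b) $ i = 0" using ab0 bc by simp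
    thus "a $ i = b $ i" using i ac bc by simp
  qed (use ac bc in simp)
qed

lemma psi_bij: assumes t: "t \<le> N" shows "bij_betw (psi t) (Mcar t) (carrier (IM t))"
proof -
  have "psi t ` Mcar t = carrier (IM t)"
  proof
    show "psi t ` Mcar t \<subseteq> carrier (IM t)" using psi_car[OF t] by auto
    show "carrier (IM t) \<subseteq> psi t ` Mcar t"
    proof
      fix X assume "X \<in> carrier (IM t)"
      then obtain a where "a \<in> Mcar t" "X = psi t a" using psi_surj[OF t] by blast
      thus "X \<in> psi t ` Mcar t" by simp
    qed
  qed
  thus ?thesis unfolding bij_betw_def using psi_inj[OF t] by simp
qed

lemma map_hclass:
  assumes st: "s \<le> t" "t \<le> N" and y: "y \<in> carrier_vec n"
  shows "imH_map C'f D' s t (hclass (Bd s) y) = hclass (Bd t) y"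
  unfolding imH_map_def Bd_def[symmetric]
  by (rule hclass_addB[OF Bd_lsub[OF st(2)] Bd_mono[OF st] lsub_zero[OF Bd_lsub] y]) (use st in auto)

lemma ism_car: assumes a: "a \<in> Mcar s" shows "int_sum_map Lb s t a \<in> Mcar t"
  unfolding Mcar_def int_sum_map_def kk_Lb using Lb_nth by auto

lemma psi_nat:
  assumes st: "s \<le> t" "t \<le> N" and a: "a \<in> Mcar s"
  shows "imH_map C'f D' s t (psi s a) = psi t (int_sum_map Lb s t a)"
proof -
  have ac: "a \<in> carrier_vec kk" using a unfolding Mcar_def by auto
  let ?a' = "int_sum_map Lb s t a"
  have a'c: "?a' \<in> carrier_vec kk" using ism_car[OF a] unfolding Mcar_def by auto
  have "imH_map C'f D' s t (psi s a) = hclass (Bd t) (F *\<^sub>v (Z *\<^sub>v a))"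
    unfolding psi_def by (rule map_hclass[OF st FZ_car[OF ac]])
  also have "\<dots> = psi t ?a'" unfolding psi_def
  proof (rule hclass_eqI[OF Bd_lsub[OF st(2)] FZ_car[OF ac] FZ_car[OF a'c]])
    have "F *\<^sub>v (Z *\<^sub>v a) - F *\<^sub>v (Z *\<^sub>v ?a') = (F * Z) *\<^sub>v (a - ?a')"
      using FZ_minus[OF ac a'c] F_carrier Zc ac a'c by simp
    also have "\<dots> \<in> Bd t"
    proof (rule lincomb_mem[OF Bd_lsub[OF st(2)]])
      show "F * Z \<in> carrier_mat n kk" using F_carrier Zc by simp
      show "a - ?a' \<in> carrier_vec kk" using ac a'c by simp
      fix \<alpha> assume al: "\<alpha> < kk" "(a - ?a') $ \<alpha> \<noteq> 0"
      hence nz: "a $ \<alpha> \<noteq> 0" and nst: "\<not> (s \<in> lab (idx ! \<alpha>) \<and> t \<in> lab (idx ! \<alpha>))"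
        using a'c ac al(1) unfolding int_sum_map_def kk_Lb by (auto simp: Lb_nth[OF al(1)] split: if_splits)
      have sl: "s \<in> lab (idx ! \<alpha>)" using a nz al(1) unfolding Mcar_def by auto
      have "col (F * Z) \<alpha> = F *\<^sub>v rep (idx ! \<alpha>)" using col_mult2[OF F_carrier Zc al(1)] colZ[OF al(1)] by simp
      thus "col (F * Z) \<alpha> \<in> Bd t" unfolding Bd_def
        using rep_die[OF idx_nth[OF al(1)] st sl] nst sl by auto
    qed
    finally show "F *\<^sub>v (Z *\<^sub>v a) - F *\<^sub>v (Z *\<^sub>v ?a') \<in> Bd t" .
  qed
  finally show ?thesis .
qed

lemma MT_add: "add (MT t) = (+)" unfolding int_sum_mod_def by (simp add: module_vec_simps)
lemma MT_smult: "smult (MT t) = (\<cdot>\<^sub>v)" unfolding int_sum_mod_def by (simp add: module_vec_simps)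

lemma eta_psi: "t \<le> N \<Longrightarrow> a \<in> Mcar t \<Longrightarrow> eta t (psi t a) = a"
  unfolding eta_def by (rule the_inv_into_f_f[OF psi_inj])

lemma eta_hom: assumes t: "t \<le> N"
  shows "eta t \<in> LinearCombinations.module_hom (class_ring :: 'a ring) (IM t) (MT t)"
  unfolding LinearCombinations.module_hom_def
proof (intro CollectI conjI allI impI)
  have bij: "bij_betw (eta t) (carrier (IM t)) (Mcar t)"
    unfolding eta_def by (rule bij_betw_the_inv_into[OF psi_bij[OF t]])
  show "eta t \<in> carrier (IM t) \<rightarrow> carrier (MT t)"
    using bij unfolding Mt_carrier bij_betw_def by auto
  fix X Y assume "X \<in> carrier (IM t) \<and> Y \<in> carrier (IM t)"
  then obtain a b where a: "a \<in> Mcar t" "X = psi t a" and b: "b \<in> Mcar t" "Y = psi t b"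
    using psi_surj[OF t] by blast
  have ac: "a \<in> carrier_vec kk" and bc: "b \<in> carrier_vec kk" using a b unfolding Mcar_def by auto
  show "eta t (X \<oplus>\<^bsub>IM t\<^esub> Y) = eta t X \<oplus>\<^bsub>MT t\<^esub> eta t Y"
    unfolding a b psi_add[OF t ac bc] MT_add eta_psi[OF t a(1)] eta_psi[OF t b(1)]
    using eta_psi[OF t lsub_add[OF Mcar_lsub a(1) b(1)]] by simp
next
  fix c :: 'a and X assume "c \<in> carrier class_ring \<and> X \<in> carrier (IM t)"
  then obtain a where a: "a \<in> Mcar t" "X = psi t a" using psi_surj[OF t] by blast
  have ac: "a \<in> carrier_vec kk" using a unfolding Mcar_def by auto
  show "eta t (c \<odot>\<^bsub>IM t\<^esub> X) = c \<odot>\<^bsub>MT t\<^esub> eta t X"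
    unfolding a psi_smult[OF t ac] MT_smult eta_psi[OF t a(1)]
    using eta_psi[OF t lsub_smult[OF Mcar_lsub a(1)]] by simp
qed

lemma IM_pers: "pers_mod N IM (imH_map C'f D')"
  unfolding pers_mod_def
proof (intro conjI allI impI ballI)
  fix t assume t: "t \<le> N"
  show "vectorspace class_ring (IM t)" unfolding IM_eq by (rule quot_vs[OF Bd_lsub[OF t] Sg_lsub[OF t]])
next
  fix s t assume st: "s \<le> t \<and> t \<le> N"
  hence st: "s \<le> t" "t \<le> N" by auto
  have sN: "s \<le> N" using st by simp
  show "imH_map C'f D' s t \<in> LinearCombinations.module_hom class_ring (IM s) (IM t)"
    unfolding LinearCombinations.module_hom_def
  proof (intro CollectI conjI allI impI)
    show "imH_map C'f D' s t \<in> carrier (IM s) \<rightarrow> carrier (IM t)"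
    proof
      fix X assume "X \<in> carrier (IM s)"
      then obtain y where y: "y \<in> Sg s" "X = hclass (Bd s) y" unfolding IM_car by auto
      have yc: "y \<in> carrier_vec n" using y lsub_carrier[OF Sg_lsub[OF sN]] by auto
      show "imH_map C'f D' s t X \<in> carrier (IM t)"
        unfolding y(2) map_hclass[OF st yc] IM_car using Sg_mono[OF st] y(1) by auto
    qed
    fix X Y assume "X \<in> carrier (IM s) \<and> Y \<in> carrier (IM s)"
    then obtain x y where xy: "x \<in> Sg s" "y \<in> Sg s" "X = hclass (Bd s) x" "Y = hclass (Bd s) y"
      unfolding IM_car by auto
    have c: "x \<in> carrier_vec n" "y \<in> carrier_vec n" using xy lsub_carrier[OF Sg_lsub[OF sN]] by auto
    have "X \<oplus>\<^bsub>IM s\<^esub> Y = hclass (Bd s) (x + y)"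
      unfolding xy IM_eq quot_simps using hclass_add[OF Bd_lsub[OF sN] c] .
    moreover have "imH_map C'f D' s t X \<oplus>\<^bsub>IM t\<^esub> imH_map C'f D' s t Y = hclass (Bd t) (x + y)"
      unfolding xy map_hclass[OF st c(1)] map_hclass[OF st c(2)] IM_eq quot_simps
      using hclass_add[OF Bd_lsub[OF st(2)] c] .
    ultimately show "imH_map C'f D' s t (X \<oplus>\<^bsub>IM s\<^esub> Y) = imH_map C'f D' s t X \<oplus>\<^bsub>IM t\<^esub> imH_map C'f D' s t Y"
      using map_hclass[OF st] c by simp
  next
    fix r :: 'a and X assume "r \<in> carrier class_ring \<and> X \<in> carrier (IM s)"
    then obtain x where xy: "x \<in> Sg s" "X = hclass (Bd s) x" unfolding IM_car by auto
    have c: "x \<in> carrier_vec n" using xy lsub_carrier[OF Sg_lsub[OF sN]] by auto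
    have "r \<odot>\<^bsub>IM s\<^esub> X = hclass (Bd s) (r \<cdot>\<^sub>v x)"
      unfolding xy IM_eq quot_simps using hclass_smult[OF Bd_lsub[OF sN] c] .
    moreover have "r \<odot>\<^bsub>IM t\<^esub> imH_map C'f D' s t X = hclass (Bd t) (r \<cdot>\<^sub>v x)"
      unfolding xy map_hclass[OF st c] IM_eq quot_simps using hclass_smult[OF Bd_lsub[OF st(2)] c] .
    ultimately show "imH_map C'f D' s t (r \<odot>\<^bsub>IM s\<^esub> X) = r \<odot>\<^bsub>IM t\<^esub> imH_map C'f D' s t X"
      using map_hclass[OF st] c by simp
  qed
next
  fix t X assume t: "t \<le> N" and X: "X \<in> carrier (IM t)"
  then obtain y where y: "y \<in> Sg t" "X = hclass (Bd t) y" unfolding IM_car by auto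
  have yc: "y \<in> carrier_vec n" using y lsub_carrier[OF Sg_lsub[OF t]] by auto
  show "imH_map C'f D' t t X = X" unfolding y(2) by (rule map_hclass[OF le_refl t yc])
next
  fix r s t X assume rst: "r \<le> s \<and> s \<le> t \<and> t \<le> N" and X: "X \<in> carrier (IM r)"
  have rN: "r \<le> N" "s \<le> N" using rst by auto
  obtain y where y: "y \<in> Sg r" "X = hclass (Bd r) y" using X unfolding IM_car by auto
  have yc: "y \<in> carrier_vec n" using y lsub_carrier[OF Sg_lsub[OF rN(1)]] by auto
  show "imH_map C'f D' s t (imH_map C'f D' r s X) = imH_map C'f D' r t X"
    unfolding y(2) using map_hclass[of r s y] map_hclass[of s t y] map_hclass[of r t y] rst yc by auto
qed

lemma main: "has_barcode N IM (imH_map C'f D') (mset Lb)"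
  unfolding has_barcode_def
proof (intro conjI ballI exI[of _ Lb])
  show "pers_mod N IM (imH_map C'f D')" by (rule IM_pers)
  fix I assume "I \<in># mset Lb"
  then obtain \<beta> where "\<beta> \<in> set idx" "I = lab \<beta>" unfolding Lb_def by auto
  thus "is_interval N I" using lab_interval by simp
next
  show "mset Lb = mset Lb" ..
  show "pers_iso N IM (imH_map C'f D') (MT) (int_sum_map Lb)"
    unfolding pers_iso_def
  proof (intro exI[of _ eta] conjI allI impI ballI)
    fix t assume t: "t \<le> N"
    show "eta t \<in> LinearCombinations.module_hom class_ring (IM t) (MT t)" by (rule eta_hom[OF t])
    show "bij_betw (eta t) (carrier (IM t)) (carrier (MT t))"
      unfolding eta_def Mt_carrier by (rule bij_betw_the_inv_into[OF psi_bij[OF t]])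
  next
    fix s t X assume st: "s \<le> t \<and> t \<le> N" and X: "X \<in> carrier (IM s)"
    have st': "s \<le> t" "t \<le> N" "s \<le> N" using st by auto
    obtain a where a: "a \<in> Mcar s" "X = psi s a" using psi_surj[OF st'(3) X] by blast
    show "eta t (imH_map C'f D' s t X) = int_sum_map Lb s t (eta s X)"
      unfolding a(2) psi_nat[OF st'(1,2) a(1)] eta_psi[OF st'(3) a(1)]
      by (rule eta_psi[OF st'(2) ism_car[OF a(1)]])
  qed
qed

end


theorem theorem3p6:
  fixes n N :: nat
    and Cf C'f :: "nat \<Rightarrow> 'a::field vec set"
    and deg deg' :: "nat \<Rightarrow> int"
    and D D' F G Dphi V Vphi R Rphi :: "'a mat"
  assumes C: "filtered_chain_complex n N deg Cf D"
    and C': "filtered_chain_complex n N deg' C'f D'"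
    and basisC: "compatible_ordered_basis n N Cf"
    and basisC': "compatible_ordered_basis n N C'f"
    and F_carrier: "F \<in> carrier_mat n n"
    and F_deg: "\<And>i j. i < n \<Longrightarrow> j < n \<Longrightarrow> F $$ (i, j) \<noteq> 0 \<Longrightarrow> deg' i = deg j"
    and F_chain: "F * D = D' * F"
    and F_filt: "\<And>t v. t \<le> N \<Longrightarrow> v \<in> Cf t \<Longrightarrow> F *\<^sub>v v \<in> C'f t"
    and F_inj: "\<And>t. t \<le> N \<Longrightarrow> inj_on (\<lambda>v. F *\<^sub>v v) (Cf t)"
    and F_iso: "invertible_mat F"
    and G_inv: "G \<in> carrier_mat n n" "F * G = 1\<^sub>m n" "G * F = 1\<^sub>m n"
    and Dphi: "Dphi = D * G"
    and V: "V \<in> carrier_mat n n" "upper_triangular V" "invertible_mat V"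
    and Vphi: "Vphi \<in> carrier_mat n n" "upper_triangular Vphi" "invertible_mat Vphi"
    and R: "R = D * V" "reduced R"
    and Rphi: "Rphi = Dphi * Vphi" "reduced Rphi"
  shows "has_barcode N (imH_mod n Cf D C'f D' F) (imH_map C'f D')
     (image_mset (\<lambda>j. supp N Cf (col Rphi j) - supp N C'f (col Vphi j))
        (filter_mset (\<lambda>j. col Rphi j \<noteq> 0\<^sub>v n \<and>
                            supp N Cf (col Rphi j) - supp N C'f (col Vphi j) \<noteq> {})
           (mset [0..<n]))
      + image_mset (\<lambda>i. supp N Cf (col V i))
        (filter_mset (\<lambda>i. col R i = 0\<^sub>v n \<and> i \<notin> pivs Rphi) (mset [0..<n])))"
proof -
  interpret thm_setup n N Cf C'f deg deg' D D' F G Dphi V Vphi R Rphi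
    using C C' basisC basisC' F_carrier F_chain G_inv Dphi V Vphi R Rphi
    by unfold_locales auto
  have "has_barcode N (imH_mod n Cf D C'f D' F) (imH_map C'f D') (mset Lb)" by (rule main)
  thus ?thesis unfolding mset_Lb .
qed

end
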